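(* Suppose that $f\in E^2$, $n\in\mathbb N$, $T>1$ and $M>1$. Then for any $\theta\in(0,1]$, $i\in\{0,1,\dots,\lfloor\theta n\rfloor-1\}$, and $z\in\mathbb R^2$ such that $\|z-f(i/n)\|<1/n^2$, \[\mathbb Q\big(\xi^T|_{[i/n,\theta]}\in\Gamma_{M,T}(f,n)|_{[i/n,\theta]}\,\big|\,\xi^T(i/n)=z\big)\le\exp\Big(-T\sum_{j=i}^{\lfloor\theta n\rfloor-1}\big(\mathcal E^+_X(I_j,\Gamma_{M,T}(f,n),T)+\mathcal E^+_Y(I_j,\Gamma_{M,T}(f,n),T)\big)\Big).\]
   Context: Let $R(x,y)=\frac{x+1}{y+1}\vee\frac{y+1}{x+1}$, $P(x,y)=\frac{y+1}{2(x+1)}\mathbb 1_{x\ge y}+\big(1-\frac{x+1}{2(y+1)}\big)\mathbb 1_{x<y}$, $R_X=RP$, $R_Y=R(1-P)$. Under $\mathbb Q$, $(\xi_t)_{t\ge0}$ is a Markov process in $\mathbb R^2$ with $\xi_0=0$ which, in state $z$, jumps at rate $2R(z)$; a jump from $z$ is $(\mathbbm e,0)$ with probability $P(z)$ and $(0,\mathbbm e)$ otherwise, with $\mathbbm e$ an independent Exp(1) variable. Write $\xi^T(s)=\xi(sT)/T$; conditioning on $\xi^T(a)=z$ means considering the process from time $aT$ onwards started at $Tz$. $\|(x_1,y_1)-(x_2,y_2)\|=\max\{|x_1-x_2|,|y_1-y_2|\}$. $E$ is the set of non-decreasing càdlàg $f:[0,1]\to\mathbb R$ with $f(0)=0$,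 with Lévy metric $d(f,g)=\inf\{r>0:f(x-r)-r<g(x)<f(x+r)+r\ \forall x\in[-r,1+r]\}$ ($f(x)=f(0)$ for $x<0$, $f(1)$ for $x>1$), and on $E^2$ the max of the coordinate distances. For a set $F\subset E^2$ and interval $I$, a function $h$ on $I$ satisfies $h\in F|_I$ iff some $g\in F$ agrees with $h$ on $I$. $G_{M,T}=\{f\in E: s/M-2T^{-2/3}\le f(s)\le M(s+2T^{-2/3})\ \forall s\in[0,1]\}$. $\Delta_n(f,g)=\max\{\|f(i/n)-g(i/n)\|:i=0,\dots,n\}$. $\Gamma_{M,T}(f,n)=B_{\Delta_n}(f,1/n^2)\cap B_d(f,1/n)\cap G_{M,T}^2$ (open balls). $I_j=[j/n,(j+1)/n]$. For a non-empty interval $I\subset[0,1]$ with infimum $I^-$, supremum $I^+$ and length $|I|$, $F\subset E^2$ and $T\ge1$: $R^-_X(I,F,T)=\inf\{R_X(Tg(s)):s\in I,g\in F\}$, $R^+_X(I,F,T)=\sup\{\cdots\}$, similarly $R^\pm_Y$; $x^-(s,F)=\inf\{g_X(s):g\in F\}$, $x^+(s,F)=\sup\{g_X(s):g\in F\}$, similarly $y^\pm$. "$X-$ case": $2R^-_X(I,F,T)|I|>x^+(I^+,F)-x^-(I^-,F)$; "$X+$ case": $x^-(I^+,F)-x^+(I^-,F)>2R^+_X(I,F,T)|I|$. Then $\mathcal E^+_X(I,F,T)=(\sqrt{2R^-_X(I,F,T)|I|}-\sqrt{x^+(I^+,F)-x^-(I^-,F)})^2$ in the $X-$ case, $=(\sqrt{2R^+_X(I,F,T)|I|}-\sqrt{x^-(I^+,F)-x^+(I^-,F)})^2$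 in the $X+$ case, and $0$ otherwise; $\mathcal E^+_Y$ is defined identically with $R^\pm_Y$, $y^\pm$ in place of $R^\pm_X$, $x^\pm$. *)

theory Defs
  imports "HOL-Probability.Probability"
begin

definition rateR :: "real \<times> real \<Rightarrow> real" where
  "rateR z = max ((fst z + 1) / (snd z + 1)) ((snd z + 1) / (fst z + 1))"

definition dirP :: "real \<times> real \<Rightarrow> real" where
  "dirP z = (if fst z \<ge> snd z then (snd z + 1) / (2 * (fst z + 1))
             else 1 - (fst z + 1) / (2 * (snd z + 1)))"

definition rateRX :: "real \<times> real \<Rightarrow> real" where
  "rateRX z = rateR z * dirP z"

definition rateRY :: "real \<times> real \<Rightarrow> real" where
  "rateRY z = rateR z * (1 - dirP z)"

text \<open>Elements of E are stored with the canonical extension used in the Levy metric: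
  f x = f 0 = 0 for x \<le> 0 and f x = f 1 for x \<ge> 1.\<close>

definition E_space :: "(real \<Rightarrow> real) set" where
  "E_space = {f. mono f \<and> (\<forall>x. continuous (at_right x) f) \<and> (\<forall>x. \<exists>l. (f \<longlongrightarrow> l) (at_left x))
     \<and> f 0 = 0 \<and> (\<forall>x\<le>0. f x = 0) \<and> (\<forall>x\<ge>1. f x = f 1)}"

type_synonym path2 = "(real \<Rightarrow> real) \<times> (real \<Rightarrow> real)"

definition E2 :: "path2 set" where
  "E2 = E_space \<times> E_space"

definition evalp :: "path2 \<Rightarrow> real \<Rightarrow> real \<times> real" where
  "evalp g s = (fst g s, snd g s)"

definition levy_d :: "(real \<Rightarrow> real) \<Rightarrow> (real \<Rightarrow> real) \<Rightarrow> real" where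
  "levy_d f g = Inf {r. r > 0 \<and> (\<forall>x\<in>{-r..1+r}. f (x - r) - r < g x \<and> g x < f (x + r) + r)}"

definition levy_d2 :: "path2 \<Rightarrow> path2 \<Rightarrow> real" where
  "levy_d2 f g = max (levy_d (fst f) (fst g)) (levy_d (snd f) (snd g))"

definition supnorm2 :: "real \<times> real \<Rightarrow> real" where
  "supnorm2 z = max \<bar>fst z\<bar> \<bar>snd z\<bar>"

definition G_set :: "real \<Rightarrow> real \<Rightarrow> (real \<Rightarrow> real) set" where
  "G_set M T = {f \<in> E_space. \<forall>s\<in>{0..1}.
      s / M - 2 * T powr (-2/3) \<le> f s \<and> f s \<le> M * (s + 2 * T powr (-2/3))}"

definition Delta_n :: "nat \<Rightarrow> path2 \<Rightarrow> path2 \<Rightarrow> real" where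
  "Delta_n n f g = Max ((\<lambda>i. supnorm2 (evalp f (real i / real n) - evalp g (real i / real n))) ` {0..n})"

definition Gamma :: "real \<Rightarrow> real \<Rightarrow> path2 \<Rightarrow> nat \<Rightarrow> path2 set" where
  "Gamma M T f n = {g \<in> E2. Delta_n n f g < 1 / (real n)^2 \<and> levy_d2 f g < 1 / real n}
                   \<inter> (G_set M T \<times> G_set M T)"

definition Ij :: "nat \<Rightarrow> nat \<Rightarrow> real set" where
  "Ij n j = {real j / real n .. real (j + 1) / real n}"

definition restr_in :: "(real \<Rightarrow> real \<times> real) \<Rightarrow> path2 set \<Rightarrow> real set \<Rightarrow> bool" where
  "restr_in h F I = (\<exists>g\<in>F. \<forall>s\<in>I. evalp g s = h s)"

definition Rminus :: "(real \<times> real \<Rightarrow> real) \<Rightarrow> real set \<Rightarrow> path2 set \<Rightarrow> real \<Rightarrow> real" where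
  "Rminus Rf I F T = Inf {Rf (T *\<^sub>R evalp g s) | s g. s \<in> I \<and> g \<in> F}"

definition Rplus :: "(real \<times> real \<Rightarrow> real) \<Rightarrow> real set \<Rightarrow> path2 set \<Rightarrow> real \<Rightarrow> real" where
  "Rplus Rf I F T = Sup {Rf (T *\<^sub>R evalp g s) | s g. s \<in> I \<and> g \<in> F}"

definition cminus :: "(path2 \<Rightarrow> real \<Rightarrow> real) \<Rightarrow> real \<Rightarrow> path2 set \<Rightarrow> real" where
  "cminus c s F = Inf {c g s | g. g \<in> F}"

definition cplus :: "(path2 \<Rightarrow> real \<Rightarrow> real) \<Rightarrow> real \<Rightarrow> path2 set \<Rightarrow> real" where
  "cplus c s F = Sup {c g s | g. g \<in> F}"

text \<open>Generic version of the functional; X: (rateRX, fst), Y: (rateRY, snd).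
  The "minus" case is checked first (the two cases are exclusive in the paper's setting).\<close>
definition calE :: "(real \<times> real \<Rightarrow> real) \<Rightarrow> (path2 \<Rightarrow> real \<Rightarrow> real) \<Rightarrow> real set \<Rightarrow> path2 set \<Rightarrow> real \<Rightarrow> real" where
  "calE Rf c I F T =
    (let Im = Inf I; Ip = Sup I; L = Ip - Im in
     if 2 * Rminus Rf I F T * L > cplus c Ip F - cminus c Im F
       then (sqrt (2 * Rminus Rf I F T * L) - sqrt (cplus c Ip F - cminus c Im F))^2
     else if cminus c Ip F - cplus c Im F > 2 * Rplus Rf I F T * L
       then (sqrt (2 * Rplus Rf I F T * L) - sqrt (cminus c Ip F - cplus c Im F))^2
     else 0)"

definition calE_X :: "real set \<Rightarrow> path2 set \<Rightarrow> real \<Rightarrow> real" where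
  "calE_X I F T = calE rateRX fst I F T"

definition calE_Y :: "real set \<Rightarrow> path2 set \<Rightarrow> real \<Rightarrow> real" where
  "calE_Y I F T = calE rateRY snd I F T"

text \<open>Randomness: an i.i.d. sequence of triples ((h, e), u) with h, e ~ Exp(1) and u ~ Unif[0,1]:
  h drives the holding time, e the jump size, u the jump direction.\<close>

type_synonym omega = "nat \<Rightarrow> (real \<times> real) \<times> real"

definition jump_meas :: "((real \<times> real) \<times> real) measure" where
  "jump_meas = (density lborel (exponential_density 1) \<Otimes>\<^sub>M density lborel (exponential_density 1))
                \<Otimes>\<^sub>M uniform_measure lborel {0..1}"

definition Q_meas :: "omega measure" where
  "Q_meas = (\<Pi>\<^sub>M k\<in>(UNIV :: nat set). jump_meas)"

primrec chain :: "real \<times> real \<Rightarrow> omega \<Rightarrow> nat \<Rightarrow> real \<times> real" where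
  "chain z0 \<omega> 0 = z0"
| "chain z0 \<omega> (Suc k) =
     (let z = chain z0 \<omega> k; e = snd (fst (\<omega> k)); u = snd (\<omega> k) in
      if u < dirP z then z + (e, 0) else z + (0, e))"

definition hold :: "real \<times> real \<Rightarrow> omega \<Rightarrow> nat \<Rightarrow> real" where
  "hold z0 \<omega> k = fst (fst (\<omega> k)) / (2 * rateR (chain z0 \<omega> k))"

text \<open>Position at time t of the process started at z0 at time 0 (jump rate 2R, holding time
  Exp(1)/(2R)); a state with non-positive rate is absorbing.\<close>
definition proc :: "real \<times> real \<Rightarrow> omega \<Rightarrow> real \<Rightarrow> real \<times> real" where
  "proc z0 \<omega> t = chain z0 \<omega>
     (LEAST k. rateR (chain z0 \<omega> k) \<le> 0 \<or> t < (\<Sum>j\<le>k. hold z0 \<omega> j))"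

definition outer_prob :: "'a measure \<Rightarrow> 'a set \<Rightarrow> real" where
  "outer_prob M A = Inf (measure M ` {B \<in> sets M. A \<subseteq> B})"

end

theory Submission
  imports Defs "HOL-Real_Asymp.Real_Asymp"
begin


abbreviation "EXPM \<equiv> density lborel (\<lambda>x. ennreal (exponential_density 1 x))"
abbreviation "UNI \<equiv> uniform_measure lborel {0..(1::real)}"

lemma prob_EXPM: "prob_space EXPM"
  by (rule prob_space_exponential_density) simp

lemma prob_UNI: "prob_space UNI"
  by (intro prob_space_uniform_measure) auto

lemma jump_meas_eq: "jump_meas = (EXPM \<Otimes>\<^sub>M EXPM) \<Otimes>\<^sub>M UNI"
  unfolding jump_meas_def ..

lemma prob_jump: "prob_space jump_meas"
  unfolding jump_meas_def
  by (intro prob_space_pair prob_space_exponential_density prob_space_uniform_measure) auto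

lemma U_int:
  fixes p A B :: real
  assumes "0 \<le> p" "p \<le> 1" "0 \<le> A" "0 \<le> B"
  shows "(\<integral>\<^sup>+u. ennreal (if u < p then A else B) \<partial>UNI) = ennreal (p * A + (1 - p) * B)"
proof -
  have "(\<integral>\<^sup>+u. ennreal (if u < p then A else B) \<partial>UNI)
      = (\<integral>\<^sup>+u. ennreal (if u < p then A else B) * indicator {0..1} u \<partial>lborel)"
    by (subst nn_integral_uniform_measure) (auto simp: divide_ennreal_def)
  also have "\<dots> = (\<integral>\<^sup>+u. ennreal A * indicator {0..<p} u + ennreal B * indicator {p..1} u \<partial>lborel)"
    using assms by (intro nn_integral_cong) (auto split: split_indicator)
  also have "\<dots> = ennreal A * emeasure lborel {0..<p} + ennreal B * emeasure lborel {p..1}"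
    by (subst nn_integral_add) (auto simp: nn_integral_cmult_indicator)
  also have "\<dots> = ennreal (p * A + (1 - p) * B)"
    using assms by (simp add: ennreal_mult[symmetric] ennreal_plus[symmetric] mult.commute del: ennreal_plus)
  finally show ?thesis .
qed

lemma E_int:
  fixes c :: real
  assumes "c < 1"
  shows "(\<integral>\<^sup>+e. ennreal (exp (c * max 0 e)) \<partial>EXPM) = ennreal (1 / (1 - c))"
proof -
  have "(\<integral>\<^sup>+e. ennreal (exp (c * max 0 e)) \<partial>EXPM)
     = (\<integral>\<^sup>+e. ennreal (exponential_density 1 e) * ennreal (exp (c * max 0 e)) \<partial>lborel)"
    by (subst nn_integral_density) auto
  also have "\<dots> = (\<integral>\<^sup>+e. ennreal (exp ((c - 1) * e)) * indicator {0..} e \<partial>lborel)"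
    by (intro nn_integral_cong)
       (auto simp: exponential_density_def ennreal_mult'[symmetric] mult_exp_exp algebra_simps split: split_indicator)
  also have "\<dots> = 0 - (exp ((c - 1) * 0) * (1 / (c - 1)))"
  proof (rule nn_integral_FTC_atLeast)
    show "((\<lambda>x. exp ((c - 1) * x) * (1 / (c - 1))) has_real_derivative exp ((c - 1) * x)) (at x)" for x
    proof -
      have "((\<lambda>x. exp ((c - 1) * x) * (1 / (c - 1))) has_real_derivative (exp ((c - 1) * x) * (c - 1)) * (1 / (c - 1))) (at x)"
        by (intro DERIV_cmult_right) (auto intro!: derivative_eq_intros)
      then show ?thesis using assms by simp
    qed
    show "((\<lambda>x. exp ((c - 1) * x) * (1 / (c - 1))) \<longlongrightarrow> 0) at_top"
      using assms by real_asymp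
  qed auto
  finally show ?thesis using assms by (simp add: divide_simps)
qed


definition ov :: "real \<Rightarrow> real \<Rightarrow> real \<Rightarrow> real \<Rightarrow> real" where
  "ov a b al be = max 0 (min b be - max a al)"

lemma ov_nonneg: "0 \<le> ov a b al be" by (simp add: ov_def)
lemma ov_same: "ov a a al be = 0" by (simp add: ov_def)
lemma ov_add: "a \<le> b \<Longrightarrow> b \<le> c \<Longrightarrow> al \<le> be \<Longrightarrow> ov a b al be + ov b c al be = ov a c al be"
  unfolding ov_def by (smt (verit))

lemma ov_deriv:
  assumes "b \<noteq> be" "b \<noteq> max a al"
  shows "((\<lambda>b. ov a b al be) has_real_derivative (if max a al < b \<and> b < be then 1 else 0)) (at b)"
proof -
  consider "be < b" | "b < be" "b < max a al" | "b < be" "max a al < b"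
    using assms by linarith
  then show ?thesis
  proof cases
    case 1
    have "((\<lambda>b. max 0 (be - max a al)) has_real_derivative 0) (at b)" by simp
    then have "((\<lambda>b. ov a b al be) has_real_derivative 0) (at b)"
    proof (rule has_field_derivative_transform_within_open[where S="{be<..}"])
      show "x \<in> {be<..} \<Longrightarrow> max 0 (be - max a al) = ov a x al be" for x by (simp add: ov_def)
    qed (use 1 in auto)
    moreover have c: "\<not> (max a al < b \<and> b < be)" using 1 by linarith
    ultimately show ?thesis by (subst if_not_P[OF c])
  next
    case 2
    have "((\<lambda>b. 0) has_real_derivative 0) (at b)" by simp
    then have "((\<lambda>b. ov a b al be) has_real_derivative 0) (at b)"
    proof (rule has_field_derivative_transform_within_open[where S="{..<min be (max a al)}"])
      show "x \<in> {..<min be (max a al)} \<Longrightarrow> 0 = ov a x al be" for x by (simp add: ov_def)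
    qed (use 2 in auto)
    moreover have c: "\<not> (max a al < b \<and> b < be)" using 2 by linarith
    ultimately show ?thesis by (subst if_not_P[OF c])
  next
    case 3
    have "((\<lambda>b. b - max a al) has_real_derivative 1) (at b)" by (auto intro!: derivative_eq_intros)
    then have "((\<lambda>b. ov a b al be) has_real_derivative 1) (at b)"
    proof (rule has_field_derivative_transform_within_open[where S="{max a al<..<be}"])
      show "x \<in> {max a al<..<be} \<Longrightarrow> x - max a al = ov a x al be" for x by (simp add: ov_def)
    qed (use 3 in auto)
    moreover have c: "max a al < b \<and> b < be" using 3 by linarith
    ultimately show ?thesis by (subst if_P[OF c])
  qed
qed

lemma continuous_on_ov[continuous_intros]:
  "continuous_on S f \<Longrightarrow> continuous_on S (\<lambda>x. ov a (f x) al be)"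
  unfolding ov_def by (intro continuous_intros)

lemma ov_measurable[measurable (raw)]:
  assumes [measurable]: "f \<in> borel_measurable M" "g \<in> borel_measurable M"
  shows "(\<lambda>x. ov (f x) (g x) al be) \<in> borel_measurable M"
  unfolding ov_def by measurable

lemma rateR_borel[measurable]: "rateR \<in> borel_measurable borel"
proof -
  have "rateR \<in> borel_measurable (borel \<Otimes>\<^sub>M borel)"
    unfolding rateR_def by measurable
  then show ?thesis by (simp add: borel_prod)
qed
lemma dirP_borel[measurable]: "dirP \<in> borel_measurable borel"
proof -
  have "dirP \<in> borel_measurable (borel \<Otimes>\<^sub>M borel)"
    unfolding dirP_def by measurable
  then show ?thesis by (simp add: borel_prod)
qed
lemma rateRX_borel[measurable]: "rateRX \<in> borel_measurable borel"
proof -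
  have "(\<lambda>z. rateR z * dirP z) \<in> borel_measurable borel" by measurable
  then show ?thesis by (simp add: rateRX_def[abs_def])
qed
lemma rateRY_borel[measurable]: "rateRY \<in> borel_measurable borel"
proof -
  have "(\<lambda>z. rateR z * (1 - dirP z)) \<in> borel_measurable borel" by measurable
  then show ?thesis by (simp add: rateRY_def[abs_def])
qed

lemma rateR_ge1: "0 \<le> fst z \<Longrightarrow> 0 \<le> snd z \<Longrightarrow> 1 \<le> rateR z"
  unfolding rateR_def by (auto simp: le_max_iff_disj divide_simps)

lemma dirP_bounds: "0 \<le> fst z \<Longrightarrow> 0 \<le> snd z \<Longrightarrow> 0 \<le> dirP z \<and> dirP z \<le> 1"
  unfolding dirP_def by (auto simp: divide_simps)

locale tiltp =
  fixes d :: real and N :: nat and th ph :: "nat \<Rightarrow> real"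
  assumes d_pos: "0 < d" and th_lt: "\<And>l. th l < 1" and ph_lt: "\<And>l. ph l < 1"
begin

definition ind :: "nat \<Rightarrow> real \<Rightarrow> bool" where
  "ind l t \<longleftrightarrow> real l * d < t \<and> t \<le> real (Suc l) * d"

definition stepf :: "(nat \<Rightarrow> real) \<Rightarrow> real \<Rightarrow> real" where
  "stepf c t = (\<Sum>l<N. if ind l t then c l else 0)"

definition coefL :: "real \<times> real \<Rightarrow> nat \<Rightarrow> real" where
  "coefL z l = 2 * rateRX z * (th l / (1 - th l)) + 2 * rateRY z * (ph l / (1 - ph l))"

definition Cz :: "real \<times> real \<Rightarrow> real \<Rightarrow> real \<Rightarrow> real" where
  "Cz z a b = (\<Sum>l<N. coefL z l * ov a b (real l * d) (real (Suc l) * d))"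

definition tilt :: "real \<Rightarrow> bool \<Rightarrow> real \<Rightarrow> real" where
  "tilt t xj e = (if xj then stepf th t * e else stepf ph t * e)"

lemma ind_unique: "ind l t \<Longrightarrow> ind l' t \<Longrightarrow> l = l'"
proof (rule ccontr)
  assume a: "ind l t" "ind l' t" "l \<noteq> l'"
  then consider "l < l'" | "l' < l" using nat_neq_iff by blast
  then show False
  proof cases
    case 1 then have "real (Suc l) \<le> real l'" by simp
    then have "real (Suc l) * d \<le> real l' * d" using d_pos by (intro mult_right_mono) auto
    moreover have "real l' * d < t" "t \<le> real (Suc l) * d" using a unfolding ind_def by auto
    ultimately show False by (meson not_less order_trans)
  next
    case 2 then have "real (Suc l') \<le> real l" by simp
    then have "real (Suc l') * d \<le> real l * d" using d_pos by (intro mult_right_mono) auto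
    moreover have "real l * d < t" "t \<le> real (Suc l') * d" using a unfolding ind_def by auto
    ultimately show False by (meson not_less order_trans)
  qed
qed

lemma stepf_eq: "l < N \<Longrightarrow> ind l t \<Longrightarrow> stepf c t = c l"
proof -
  assume a: "l < N" "ind l t"
  have "stepf c t = (\<Sum>l'<N. if l' = l then c l else 0)"
    unfolding stepf_def by (intro sum.cong refl) (use a ind_unique in auto)
  then show ?thesis using a by simp
qed

lemma stepf_zero: "(\<And>l. l < N \<Longrightarrow> \<not> ind l t) \<Longrightarrow> stepf c t = 0"
  unfolding stepf_def by (intro sum.neutral) auto

lemma stepf_lt: assumes that: "\<And>l. c l < 1" shows "stepf c t < 1"
proof (cases "\<exists>l<N. ind l t")
  case True
  then obtain l where "l < N" "ind l t" by blast
  then show ?thesis using that stepf_eq[of l t c] by simp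
next
  case False
  have "stepf c t = 0" by (rule stepf_zero) (use False in blast)
  then show ?thesis by linarith
qed

lemma stepf_borel[measurable]: "stepf c \<in> borel_measurable borel"
  unfolding stepf_def[abs_def] ind_def by measurable

lemma Cz_measurable[measurable (raw)]:
  assumes [measurable]: "f \<in> borel_measurable M" "g \<in> borel_measurable M" "k \<in> borel_measurable M"
  shows "(\<lambda>x. Cz (f x) (g x) (k x)) \<in> borel_measurable M"
  unfolding Cz_def coefL_def by measurable

lemma tilt_measurable[measurable (raw)]:
  assumes [measurable]: "f \<in> borel_measurable M" "Measurable.pred M P" "g \<in> borel_measurable M"
  shows "(\<lambda>x. tilt (f x) (P x) (g x)) \<in> borel_measurable M"
  unfolding tilt_def by measurable

lemma Cz_same: "Cz z a a = 0"
  unfolding Cz_def by (intro sum.neutral ballI) (simp only: ov_same mult_zero_right)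

end


context tiltp begin

lemma coef_alg:
  fixes R P x y :: real
  assumes "R > 0" "x < 1" "y < 1"
  shows "1 + (2 * (R * P) * (x / (1 - x)) + 2 * (R * (1 - P)) * (y / (1 - y))) * (1 / (2 * R))
       = P / (1 - x) + (1 - P) / (1 - y)"
proof -
  define u where "u = 1 / (1 - x)"
  define v where "v = 1 / (1 - y)"
  have a: "x / (1 - x) = u - 1" "y / (1 - y) = v - 1" "P / (1 - x) = P * u" "(1 - P) / (1 - y) = (1 - P) * v"
    using assms unfolding u_def v_def by (auto simp: field_simps)
  show ?thesis unfolding a using assms by (simp add: field_simps)
qed

lemma coef_identity:
  assumes z: "0 \<le> fst z" "0 \<le> snd z"
  shows "1 + coefL z l * (1 / (2 * rateR z)) = dirP z / (1 - th l) + (1 - dirP z) / (1 - ph l)"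
proof -
  have R: "rateR z > 0" using rateR_ge1[OF z] by linarith
  show ?thesis
    unfolding coefL_def rateRX_def rateRY_def using coef_alg[OF R th_lt ph_lt] by simp
qed

lemma h_int_le1:
  assumes z: "0 \<le> fst z" "0 \<le> snd z"
  shows "(\<integral>\<^sup>+h. ennreal (exp (- h) * exp (- Cz z t0 (t0 + h / (2 * rateR z))) *
            (dirP z / (1 - stepf th (t0 + h / (2 * rateR z))) + (1 - dirP z) / (1 - stepf ph (t0 + h / (2 * rateR z)))))
          * indicator {0..} h \<partial>lborel) \<le> 1"
proof -
  define R where "R = rateR z"
  define P where "P = dirP z"
  have R: "R \<ge> 1" using rateR_ge1[OF z] by (simp add: R_def)
  have P: "0 \<le> P" "P \<le> 1" using dirP_bounds[OF z] by (auto simp: P_def)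
  define tt where "tt h = t0 + h / (2 * R)" for h
  define g where "g t = P / (1 - stepf th t) + (1 - P) / (1 - stepf ph t)" for t
  define f where "f h = exp (- h) * exp (- Cz z t0 (tt h)) * g (tt h)" for h
  define F where "F h = - exp (- h - Cz z t0 (tt h))" for h
  have g_nn: "0 \<le> g t" for t
    using P stepf_lt[of th t, OF th_lt] stepf_lt[of ph t, OF ph_lt] unfolding g_def
    by (intro add_nonneg_nonneg divide_nonneg_pos) auto
  have f_nn: "0 \<le> f h" for h unfolding f_def using g_nn by simp
  have f_meas[measurable]: "f \<in> borel_measurable borel"
    unfolding f_def g_def tt_def by measurable
  define Ex where "Ex = (\<Union>l<N. {real (Suc l) * d, max t0 (real l * d), real l * d})"
  have Ex_fin: "finite Ex" unfolding Ex_def by auto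
  define Sx where "Sx = (\<lambda>t. 2 * R * (t - t0)) ` Ex"
  have Sx_fin: "finite Sx" unfolding Sx_def using Ex_fin by auto
  have tt_Sx: "tt h \<notin> Ex" if "h \<notin> Sx" for h
  proof
    assume "tt h \<in> Ex"
    moreover have "h = 2 * R * (tt h - t0)" unfolding tt_def using R by (simp add: field_simps)
    ultimately show False using that unfolding Sx_def by auto
  qed
  have deriv: "(F has_real_derivative f h) (at h)" if h: "0 < h" "h \<notin> Sx" for h
  proof -
    have nE: "tt h \<notin> Ex" using tt_Sx h by auto
    have gt: "t0 < tt h" unfolding tt_def using h R by (simp add: field_simps)
    define c where "c l = (if max t0 (real l * d) < tt h \<and> tt h < real (Suc l) * d then 1 else 0::real)" for l
    have dC: "((\<lambda>h. Cz z t0 (tt h)) has_real_derivative (\<Sum>l<N. coefL z l * (c l * (1 / (2 * R))))) (at h)"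
      unfolding Cz_def
    proof (intro DERIV_sum DERIV_cmult)
      fix l assume l: "l \<in> {..<N}"
      have "((\<lambda>b. ov t0 b (real l * d) (real (Suc l) * d)) has_real_derivative c l) (at (tt h))"
        unfolding c_def using nE l by (intro ov_deriv) (auto simp: Ex_def)
      moreover have "(tt has_real_derivative (1 / (2 * R))) (at h)"
        unfolding tt_def using R by (auto intro!: derivative_eq_intros)
      ultimately show "((\<lambda>h. ov t0 (tt h) (real l * d) (real (Suc l) * d)) has_real_derivative c l * (1 / (2 * R))) (at h)"
        by (rule DERIV_chain2)
    qed
    have key: "1 + (\<Sum>l<N. coefL z l * (c l * (1 / (2 * R)))) = g (tt h)"
    proof (cases "\<exists>l<N. ind l (tt h)")
      case True
      then obtain l where l: "l < N" "ind l (tt h)" by blast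
      have c_eq: "c l' = (if l' = l then 1 else 0)" if "l' < N" for l'
      proof -
        have "c l' = (if ind l' (tt h) then 1 else 0)"
          unfolding c_def ind_def using nE gt that by (auto simp: Ex_def)
        then show ?thesis using l ind_unique by auto
      qed
      have "(\<Sum>l'<N. coefL z l' * (c l' * (1 / (2 * R)))) = (\<Sum>l'<N. if l' = l then coefL z l * (1 / (2 * R)) else 0)"
        by (intro sum.cong refl) (simp add: c_eq)
      also have "\<dots> = coefL z l * (1 / (2 * R))" using l by simp
      finally show ?thesis
        using coef_identity[OF z, of l] l unfolding g_def R_def P_def
        by (simp add: stepf_eq)
    next
      case False
      have c0: "c l' = 0" if "l' < N" for l'
      proof -
        have "c l' = (if ind l' (tt h) then 1 else 0)"
          unfolding c_def ind_def using nE gt that by (auto simp: Ex_def)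
        then show ?thesis using False that by auto
      qed
      have s0: "stepf th (tt h) = 0" "stepf ph (tt h) = 0"
        by (rule stepf_zero, use False in blast)+
      show ?thesis using c0 unfolding g_def s0 by simp
    qed
    have "(F has_real_derivative exp (- h - Cz z t0 (tt h)) * (1 + (\<Sum>l<N. coefL z l * (c l * (1 / (2 * R)))))) (at h)"
      unfolding F_def by (auto intro!: derivative_eq_intros dC simp: algebra_simps)
    then show ?thesis unfolding key f_def using R by (simp add: exp_diff exp_minus field_simps)
  qed
  have cont: "continuous_on {0..b} F" for b
    unfolding F_def Cz_def tt_def using R by (intro continuous_intros) auto
  have F0: "F 0 = -1" unfolding F_def tt_def by (simp add: Cz_same)
  have fin: "(\<integral>\<^sup>+h. ennreal (f h) * indicator {0..b} h \<partial>lborel) \<le> 1" if b: "0 \<le> b" for b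
  proof -
    have "(f has_integral F b - F 0) {0..b}"
    proof (rule fundamental_theorem_of_calculus_interior_strong[OF Sx_fin b])
      show "x \<in> {0<..<b} - Sx \<Longrightarrow> (F has_vector_derivative f x) (at x)" for x
        using deriv[of x] by (auto simp: has_real_derivative_iff_has_vector_derivative)
    qed (rule cont)
    then have "integral\<^sup>N lborel (\<lambda>x. indicator {0..b} x * f x) = F b - F 0"
      by (intro nn_integral_has_integral_lebesgue) (use f_nn in auto)
    moreover have "F b - F 0 \<le> 1" using F0 unfolding F_def[of b] by simp
    ultimately show ?thesis
      by (simp add: mult.commute ennreal_mult'' ennreal_indicator)
  qed
  let ?f = "\<lambda>(i::nat) (x::real). ennreal (f x) * indicator {0..real i} x"
  let ?fR = "\<lambda>x. ennreal (f x) * indicator {0..} x"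
  have "(SUP i. ?f i x) = ?fR x" for x
  proof (rule LIMSEQ_unique[OF LIMSEQ_SUP])
    obtain n where "x < real n"
      using reals_Archimedean2[of "x"] ..
    then have "eventually (\<lambda>n. ?f n x = ?fR x) sequentially"
      by (auto simp: frequently_def intro!: eventually_sequentiallyI[where c=n] split: split_indicator)
    then show "(\<lambda>n. ?f n x) \<longlonglongrightarrow> ?fR x"
      by (rule tendsto_eventually)
  qed (auto simp: incseq_def le_fun_def split: split_indicator)
  then have "integral\<^sup>N lborel ?fR = (\<integral>\<^sup>+ x. (SUP i. ?f i x) \<partial>lborel)"
    by simp
  also have "\<dots> = (SUP i. (\<integral>\<^sup>+ x. ?f i x \<partial>lborel))"
    by (rule nn_integral_monotone_convergence_SUP) (auto simp: incseq_def le_fun_def split: split_indicator)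
  also have "\<dots> \<le> 1"
    by (intro SUP_least fin) auto
  finally show ?thesis unfolding f_def g_def tt_def R_def P_def .
qed

end


context tiltp begin

lemma one_step:
  assumes z: "0 \<le> fst z" "0 \<le> snd z"
  shows "(\<integral>\<^sup>+s. ennreal (exp (tilt (t0 + fst (fst s) / (2 * rateR z)) (snd s < dirP z) (max 0 (snd (fst s)))
            - Cz z t0 (t0 + fst (fst s) / (2 * rateR z)))) \<partial>jump_meas) \<le> 1"
proof -
  define R where "R = rateR z"
  define P where "P = dirP z"
  have R: "R \<ge> 1" using rateR_ge1[OF z] by (simp add: R_def)
  have P: "0 \<le> P" "P \<le> 1" using dirP_bounds[OF z] by (auto simp: P_def)
  define tt where "tt h = t0 + h / (2 * R)" for h
  define C where "C h = Cz z t0 (tt h)" for h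
  define A where "A h e = exp (stepf th (tt h) * max 0 e - C h)" for h e
  define B where "B h e = exp (stepf ph (tt h) * max 0 e - C h)" for h e
  have sfU: "sigma_finite_measure UNI" by (rule prob_space_imp_sigma_finite[OF prob_UNI])
  have sfE: "sigma_finite_measure EXPM" by (rule prob_space_imp_sigma_finite[OF prob_EXPM])
  have meas1: "(\<lambda>s. ennreal (exp (tilt (tt (fst (fst s))) (snd s < P) (max 0 (snd (fst s))) - C (fst (fst s)))))
      \<in> borel_measurable ((EXPM \<Otimes>\<^sub>M EXPM) \<Otimes>\<^sub>M UNI)"
    unfolding C_def tt_def by measurable
  have "(\<integral>\<^sup>+s. ennreal (exp (tilt (tt (fst (fst s))) (snd s < P) (max 0 (snd (fst s))) - C (fst (fst s)))) \<partial>jump_meas)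
      = (\<integral>\<^sup>+x. \<integral>\<^sup>+u. ennreal (exp (tilt (tt (fst x)) (u < P) (max 0 (snd x)) - C (fst x))) \<partial>UNI \<partial>(EXPM \<Otimes>\<^sub>M EXPM))"
    unfolding jump_meas_eq
    by (subst sigma_finite_measure.nn_integral_fst[OF sfU meas1, symmetric]) simp
  also have "\<dots> = (\<integral>\<^sup>+x. ennreal (P * A (fst x) (snd x) + (1 - P) * B (fst x) (snd x)) \<partial>(EXPM \<Otimes>\<^sub>M EXPM))"
  proof (intro nn_integral_cong)
    fix x :: "real \<times> real"
    have "(\<integral>\<^sup>+u. ennreal (exp (tilt (tt (fst x)) (u < P) (max 0 (snd x)) - C (fst x))) \<partial>UNI)
        = (\<integral>\<^sup>+u. ennreal (if u < P then A (fst x) (snd x) else B (fst x) (snd x)) \<partial>UNI)"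
      by (intro nn_integral_cong) (auto simp: tilt_def A_def B_def)
    also have "\<dots> = ennreal (P * A (fst x) (snd x) + (1 - P) * B (fst x) (snd x))"
      using P by (intro U_int) (auto simp: A_def B_def)
    finally show "(\<integral>\<^sup>+u. ennreal (exp (tilt (tt (fst x)) (u < P) (max 0 (snd x)) - C (fst x))) \<partial>UNI)
        = ennreal (P * A (fst x) (snd x) + (1 - P) * B (fst x) (snd x))" .
  qed
  also have "\<dots> = (\<integral>\<^sup>+h. \<integral>\<^sup>+e. ennreal (P * A h e + (1 - P) * B h e) \<partial>EXPM \<partial>EXPM)"
    by (subst sigma_finite_measure.nn_integral_fst[OF sfE, symmetric])
       (auto simp: A_def B_def C_def tt_def)
  also have "\<dots> = (\<integral>\<^sup>+h. ennreal (exp (- C h) * (P / (1 - stepf th (tt h)) + (1 - P) / (1 - stepf ph (tt h)))) \<partial>EXPM)"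
  proof (intro nn_integral_cong)
    fix h :: real
    have t1: "stepf th (tt h) < 1" "stepf ph (tt h) < 1" using stepf_lt th_lt ph_lt by auto
    have "(\<integral>\<^sup>+e. ennreal (P * A h e + (1 - P) * B h e) \<partial>EXPM)
       = (\<integral>\<^sup>+e. ennreal (P * exp (- C h)) * ennreal (exp (stepf th (tt h) * max 0 e))
                + ennreal ((1 - P) * exp (- C h)) * ennreal (exp (stepf ph (tt h) * max 0 e)) \<partial>EXPM)"
      using P by (intro nn_integral_cong)
        (simp add: A_def B_def ennreal_mult'' [symmetric] ennreal_plus[symmetric] exp_diff exp_minus field_simps del: ennreal_plus)
    also have "\<dots> = ennreal (P * exp (- C h)) * ennreal (1 / (1 - stepf th (tt h)))
                   + ennreal ((1 - P) * exp (- C h)) * ennreal (1 / (1 - stepf ph (tt h)))"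
      by (simp add: nn_integral_add nn_integral_cmult E_int t1)
    also have "\<dots> = ennreal (exp (- C h) * (P / (1 - stepf th (tt h)) + (1 - P) / (1 - stepf ph (tt h))))"
      using P t1 by (simp add: ennreal_mult'' [symmetric] ennreal_plus[symmetric] field_simps del: ennreal_plus)
    finally show "(\<integral>\<^sup>+e. ennreal (P * A h e + (1 - P) * B h e) \<partial>EXPM)
       = ennreal (exp (- C h) * (P / (1 - stepf th (tt h)) + (1 - P) / (1 - stepf ph (tt h))))" .
  qed
  also have "\<dots> = (\<integral>\<^sup>+h. ennreal (exp (- h) * exp (- C h) * (P / (1 - stepf th (tt h)) + (1 - P) / (1 - stepf ph (tt h))))
          * indicator {0..} h \<partial>lborel)"
    by (subst nn_integral_density)
       (auto intro!: nn_integral_cong simp: C_def tt_def exponential_density_def mult.assoc ennreal_mult' 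
          split: split_indicator)
  also have "\<dots> \<le> 1"
    using h_int_le1[OF z, of t0] unfolding C_def tt_def R_def P_def .
  finally show ?thesis unfolding C_def tt_def R_def P_def .
qed

end


interpretation JS: sequence_space jump_meas
  by (simp add: sequence_space_def product_prob_space_def product_prob_space_axioms_def
      product_sigma_finite_def prob_space_imp_sigma_finite prob_jump)

lemma sets_jump: "sets jump_meas = sets ((borel \<Otimes>\<^sub>M borel) \<Otimes>\<^sub>M (borel :: real measure))"
  unfolding jump_meas_def by (intro sets_pair_measure_cong) auto

lemma comp_meas[measurable]: "(\<lambda>\<omega>. \<omega> k) \<in> Q_meas \<rightarrow>\<^sub>M ((borel \<Otimes>\<^sub>M borel) \<Otimes>\<^sub>M (borel :: real measure))"
proof -
  have "(\<lambda>\<omega>. \<omega> k) \<in> Q_meas \<rightarrow>\<^sub>M jump_meas"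
    unfolding Q_meas_def by (rule measurable_component_singleton) simp
  then show ?thesis using measurable_cong_sets[OF refl sets_jump] by blast
qed

lemma Q_eq: "Q_meas = (\<Pi>\<^sub>M i\<in>(UNIV :: nat set). jump_meas)"
  by (simp add: Q_meas_def)

lemma prob_Q: "prob_space Q_meas"
  unfolding Q_meas_def by (rule JS.P.prob_space_axioms)

primrec ch :: "real \<times> real \<Rightarrow> omega \<Rightarrow> nat \<Rightarrow> real \<times> real" where
  "ch z0 \<omega> 0 = z0"
| "ch z0 \<omega> (Suc k) =
     (if snd (\<omega> k) < dirP (ch z0 \<omega> k) then ch z0 \<omega> k + (max 0 (snd (fst (\<omega> k))), 0)
      else ch z0 \<omega> k + (0, max 0 (snd (fst (\<omega> k)))))"

definition hd :: "real \<times> real \<Rightarrow> omega \<Rightarrow> nat \<Rightarrow> real" where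
  "hd z0 \<omega> k = fst (fst (\<omega> k)) / (2 * rateR (ch z0 \<omega> k))"

definition Sf :: "real \<times> real \<Rightarrow> real \<Rightarrow> omega \<Rightarrow> nat \<Rightarrow> real" where
  "Sf z0 t0 \<omega> k = t0 + (\<Sum>j<k. hd z0 \<omega> j)"

lemma ch_shift: "ch z0 \<omega> (Suc k) = ch (ch z0 \<omega> 1) (\<lambda>n. \<omega> (Suc n)) k"
proof -
  define z1 where "z1 = ch z0 \<omega> 1"
  have "ch z0 \<omega> (Suc k) = ch z1 (\<lambda>n. \<omega> (Suc n)) k"
  proof (induction k)
    case 0 then show ?case by (simp add: z1_def)
  next
    case (Suc k)
    show ?case
      by (simp only: ch.simps(2)[of z0 \<omega> "Suc k"] ch.simps(2)[of z1 "\<lambda>n. \<omega> (Suc n)" k] Suc.IH)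
  qed
  then show ?thesis by (simp add: z1_def)
qed

lemma hd_shift: "hd z0 \<omega> (Suc j) = hd (ch z0 \<omega> 1) (\<lambda>n. \<omega> (Suc n)) j"
  unfolding hd_def by (simp only: ch_shift)

lemma Sf_shift: "Sf z0 t0 \<omega> (Suc k) = Sf (ch z0 \<omega> 1) (Sf z0 t0 \<omega> 1) (\<lambda>n. \<omega> (Suc n)) k"
  unfolding Sf_def sum.lessThan_Suc_shift hd_shift by simp

lemma ch_nonneg: "0 \<le> fst z0 \<Longrightarrow> 0 \<le> snd z0 \<Longrightarrow> 0 \<le> fst (ch z0 \<omega> k) \<and> 0 \<le> snd (ch z0 \<omega> k)"
  by (induction k) auto

lemma ch_measurable[measurable]: "(\<lambda>\<omega>. ch z0 \<omega> k) \<in> borel_measurable Q_meas"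
proof (induction k)
  case 0 then show ?case by simp
next
  case (Suc k)
  note Suc[measurable]
  show ?case unfolding ch.simps by measurable
qed

context tiltp begin

definition Wterm :: "real \<times> real \<Rightarrow> real \<Rightarrow> omega \<Rightarrow> nat \<Rightarrow> real" where
  "Wterm z0 t0 \<omega> m = tilt (Sf z0 t0 \<omega> (Suc m)) (snd (\<omega> m) < dirP (ch z0 \<omega> m)) (max 0 (snd (fst (\<omega> m))))
        - Cz (ch z0 \<omega> m) (Sf z0 t0 \<omega> m) (Sf z0 t0 \<omega> (Suc m))"

definition W :: "nat \<Rightarrow> real \<times> real \<Rightarrow> real \<Rightarrow> omega \<Rightarrow> real" where
  "W k z0 t0 \<omega> = exp (\<Sum>m<k. Wterm z0 t0 \<omega> m)"

lemma W_measurable[measurable]: "W k z0 t0 \<in> borel_measurable Q_meas"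
  unfolding W_def[abs_def] Wterm_def Sf_def hd_def by measurable

lemma Wterm_Suc: "Wterm z0 t0 \<omega> (Suc m) = Wterm (ch z0 \<omega> 1) (Sf z0 t0 \<omega> 1) (\<lambda>n. \<omega> (Suc n)) m"
proof -
  define z1 where "z1 = ch z0 \<omega> 1"
  define t1 where "t1 = Sf z0 t0 \<omega> 1"
  define \<omega>' where "\<omega>' = (\<lambda>n. \<omega> (Suc n))"
  have e1: "ch z0 \<omega> (Suc j) = ch z1 \<omega>' j" for j unfolding z1_def \<omega>'_def by (rule ch_shift)
  have e2: "Sf z0 t0 \<omega> (Suc j) = Sf z1 t1 \<omega>' j" for j unfolding z1_def t1_def \<omega>'_def by (rule Sf_shift)
  have e3: "\<omega> (Suc m) = \<omega>' m" unfolding \<omega>'_def by simp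
  show ?thesis unfolding Wterm_def e1 e2 e3 z1_def[symmetric] t1_def[symmetric] \<omega>'_def[symmetric] ..
qed

lemma W_Suc: "W (Suc k) z0 t0 \<omega> = exp (Wterm z0 t0 \<omega> 0) * W k (ch z0 \<omega> 1) (Sf z0 t0 \<omega> 1) (\<lambda>n. \<omega> (Suc n))"
  unfolding W_def sum.lessThan_Suc_shift Wterm_Suc exp_add ..

lemma Wterm_0: "Wterm z0 t0 \<omega> 0 = tilt (t0 + fst (fst (\<omega> 0)) / (2 * rateR z0)) (snd (\<omega> 0) < dirP z0) (max 0 (snd (fst (\<omega> 0))))
        - Cz z0 t0 (t0 + fst (fst (\<omega> 0)) / (2 * rateR z0))"
  unfolding Wterm_def Sf_def hd_def by simp

end


context tiltp begin

lemma W_int: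
  assumes "0 \<le> fst z0" "0 \<le> snd z0"
  shows "(\<integral>\<^sup>+\<omega>. ennreal (W k z0 t0 \<omega>) \<partial>Q_meas) \<le> 1"
  using assms
proof (induction k arbitrary: z0 t0)
  case 0
  show ?case using prob_space.emeasure_space_1[OF prob_Q] by (simp add: W_def)
next
  case (Suc k)
  define T0 where "T0 s = tilt (t0 + fst (fst s) / (2 * rateR z0)) (snd s < dirP z0) (max 0 (snd (fst s)))
        - Cz z0 t0 (t0 + fst (fst s) / (2 * rateR z0))" for s :: "(real \<times> real) \<times> real"
  define z1 where "z1 s = (if snd s < dirP z0 then z0 + (max 0 (snd (fst s)), 0) else z0 + (0, max 0 (snd (fst s))))"
    for s :: "(real \<times> real) \<times> real"
  define t1 where "t1 s = t0 + fst (fst s) / (2 * rateR z0)" for s :: "(real \<times> real) \<times> real"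
  have z1_nn: "0 \<le> fst (z1 s)" "0 \<le> snd (z1 s)" for s using Suc.prems unfolding z1_def by auto
  have decomp: "W (Suc k) z0 t0 (case_nat s \<omega>') = exp (T0 s) * W k (z1 s) (t1 s) \<omega>'" for s \<omega>'
    unfolding W_Suc Wterm_0 by (simp add: T0_def z1_def t1_def Sf_def hd_def)
  have sfQ: "sigma_finite_measure Q_meas" by (rule prob_space_imp_sigma_finite[OF prob_Q])
  have cn: "(\<lambda>(s, \<omega>). case_nat s \<omega>) \<in> jump_meas \<Otimes>\<^sub>M Q_meas \<rightarrow>\<^sub>M Q_meas"
    unfolding Q_meas_def by measurable
  have "(\<integral>\<^sup>+\<omega>. ennreal (W (Suc k) z0 t0 \<omega>) \<partial>Q_meas)
      = (\<integral>\<^sup>+\<omega>. ennreal (W (Suc k) z0 t0 \<omega>) \<partial>distr (jump_meas \<Otimes>\<^sub>M Q_meas) Q_meas (\<lambda>(s, \<omega>). case_nat s \<omega>))"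
    using JS.PiM_iter by (simp add: Q_meas_def)
  also have "\<dots> = (\<integral>\<^sup>+x. ennreal (W (Suc k) z0 t0 ((\<lambda>(s, \<omega>). case_nat s \<omega>) x)) \<partial>(jump_meas \<Otimes>\<^sub>M Q_meas))"
    by (rule nn_integral_distr[OF cn]) simp
  also have "\<dots> = (\<integral>\<^sup>+s. \<integral>\<^sup>+\<omega>'. ennreal (W (Suc k) z0 t0 (case_nat s \<omega>')) \<partial>Q_meas \<partial>jump_meas)"
  proof (subst sigma_finite_measure.nn_integral_fst[OF sfQ, symmetric])
    show "(\<lambda>x. ennreal (W (Suc k) z0 t0 ((\<lambda>(s, \<omega>). case_nat s \<omega>) x))) \<in> borel_measurable (jump_meas \<Otimes>\<^sub>M Q_meas)"
      using measurable_compose[OF cn W_measurable] by simp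
  qed simp
  also have "\<dots> = (\<integral>\<^sup>+s. ennreal (exp (T0 s)) * (\<integral>\<^sup>+\<omega>'. ennreal (W k (z1 s) (t1 s) \<omega>') \<partial>Q_meas) \<partial>jump_meas)"
    unfolding decomp by (intro nn_integral_cong) (simp add: ennreal_mult' nn_integral_cmult)
  also have "\<dots> \<le> (\<integral>\<^sup>+s. ennreal (exp (T0 s)) \<partial>jump_meas)"
    by (intro nn_integral_mono) (use Suc.IH[OF z1_nn] in \<open>auto intro: mult_left_le\<close>)
  also have "\<dots> \<le> 1" unfolding T0_def by (rule one_step[OF Suc.prems])
  finally show ?case .
qed

end


definition Nt :: "(nat \<Rightarrow> real) \<Rightarrow> real \<Rightarrow> nat" where
  "Nt S t = (LEAST k. t < S (Suc k))"

lemma Nt_le_iff: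
  assumes "strict_mono S" "t < S (Suc k0)"
  shows "Nt S t \<le> m \<longleftrightarrow> t < S (Suc m)"
proof
  assume "Nt S t \<le> m"
  moreover have "t < S (Suc (Nt S t))" unfolding Nt_def by (rule LeastI[of _ k0]) (rule assms(2))
  ultimately show "t < S (Suc m)"
    using strict_mono_less_eq[OF assms(1), of "Suc (Nt S t)" "Suc m"] by auto
next
  assume "t < S (Suc m)"
  then show "Nt S t \<le> m" unfolding Nt_def by (rule Least_le)
qed

lemma Nt_eq:
  assumes "strict_mono S" "S m \<le> t" "t < S (Suc m)"
  shows "Nt S t = m"
proof -
  have le: "Nt S t \<le> m" using Nt_le_iff[OF assms(1) assms(3)] assms(3) by simp
  show ?thesis
  proof (rule ccontr)
    assume "Nt S t \<noteq> m"
    then have "Suc (Nt S t) \<le> m" using le by simp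
    then have "S (Suc (Nt S t)) \<le> S m" using strict_mono_less_eq[OF assms(1)] by blast
    moreover have "t < S (Suc (Nt S t))" using Nt_le_iff[OF assms(1) assms(3), of "Nt S t"] by simp
    ultimately show False using assms(2) by linarith
  qed
qed

lemma sum_window:
  fixes F :: "nat \<Rightarrow> real"
  assumes S: "strict_mono S" and ab: "al \<le> be" and bk: "be < S (Suc k0)"
  shows "(\<Sum>m<Suc k0. if al < S (Suc m) \<and> S (Suc m) \<le> be then F (Suc m) - F m else 0)
       = F (Nt S be) - F (Nt S al)"
proof -
  have ak: "al < S (Suc k0)" using ab bk by linarith
  have i1: "al < S (Suc m) \<longleftrightarrow> Nt S al \<le> m" for m using Nt_le_iff[OF S ak, of m] by simp
  have i2: "S (Suc m) \<le> be \<longleftrightarrow> m < Nt S be" for m using Nt_le_iff[OF S bk, of m] by linarith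
  have nb: "Nt S be \<le> k0" using Nt_le_iff[OF S bk, of k0] bk by simp
  have set_eq: "{m \<in> {..<Suc k0}. al < S (Suc m) \<and> S (Suc m) \<le> be} = {Nt S al..<Nt S be}"
  proof (rule set_eqI)
    fix m
    show "m \<in> {m \<in> {..<Suc k0}. al < S (Suc m) \<and> S (Suc m) \<le> be} \<longleftrightarrow> m \<in> {Nt S al..<Nt S be}"
      unfolding i1 i2 using nb by auto
  qed
  have le: "Nt S al \<le> Nt S be"
  proof -
    have "al < S (Suc (Nt S be))" using Nt_le_iff[OF S bk, of "Nt S be"] ab by simp
    then show ?thesis using i1 by blast
  qed
  have "(\<Sum>m<Suc k0. if al < S (Suc m) \<and> S (Suc m) \<le> be then F (Suc m) - F m else 0)
      = (\<Sum>m\<in>{m \<in> {..<Suc k0}. al < S (Suc m) \<and> S (Suc m) \<le> be}. F (Suc m) - F m)"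
    by (rule sum.inter_filter[symmetric]) simp
  also have "\<dots> = (\<Sum>m = Nt S al..<Nt S be. F (Suc m) - F m)" unfolding set_eq ..
  also have "\<dots> = F (Nt S be) - F (Nt S al)" by (rule sum_Suc_diff'[OF le])
  finally show ?thesis .
qed

lemma ov_sum:
  assumes "mono S" "al \<le> be"
  shows "(\<Sum>m<k. ov (S m) (S (Suc m)) al be) = ov (S 0) (S k) al be"
proof (induction k)
  case 0 then show ?case by (simp add: ov_same)
next
  case (Suc k)
  have "S 0 \<le> S k" "S k \<le> S (Suc k)" using assms(1) by (auto simp: mono_def)
  then show ?case using Suc ov_add[of "S 0" "S k" "S (Suc k)" al be] assms(2) by simp
qed

context tiltp begin

lemma path_bound:
  fixes S :: "nat \<Rightarrow> real" and c :: "nat \<Rightarrow> real \<times> real" and xj :: "nat \<Rightarrow> bool" and e :: "nat \<Rightarrow> real"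
  assumes S: "strict_mono S" "S 0 = 0" and Sk: "real N * d < S (Suc k0)"
    and c: "\<And>m. c (Suc m) = (if xj m then c m + (e m, 0) else c m + (0, e m))"
    and kap: "\<And>l m. l < N \<Longrightarrow> m < Suc k0 \<Longrightarrow> 0 < ov (S m) (S (Suc m)) (real l * d) (real (Suc l) * d) \<Longrightarrow> coefL (c m) l \<le> \<kappa> l"
  shows "(\<Sum>l<N. th l * (fst (c (Nt S (real (Suc l) * d))) - fst (c (Nt S (real l * d))))
               + ph l * (snd (c (Nt S (real (Suc l) * d))) - snd (c (Nt S (real l * d)))) - \<kappa> l * d)
     \<le> (\<Sum>m<Suc k0. tilt (S (Suc m)) (xj m) (e m) - Cz (c m) (S m) (S (Suc m)))"
proof -
  define k where "k = Suc k0"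
  define dx where "dx m = fst (c (Suc m)) - fst (c m)" for m
  define dy where "dy m = snd (c (Suc m)) - snd (c m)" for m
  have tilt_eq: "tilt t (xj m) (e m) = stepf th t * dx m + stepf ph t * dy m" for t m
    unfolding tilt_def dx_def dy_def c by simp
  have lN: "real (Suc l) * d \<le> real N * d" if "l < N" for l
    using that d_pos by (intro mult_right_mono) auto
  have part1: "(\<Sum>m<k. tilt (S (Suc m)) (xj m) (e m))
      = (\<Sum>l<N. th l * (fst (c (Nt S (real (Suc l) * d))) - fst (c (Nt S (real l * d))))
               + ph l * (snd (c (Nt S (real (Suc l) * d))) - snd (c (Nt S (real l * d)))))"
  proof -
    have "(\<Sum>m<k. tilt (S (Suc m)) (xj m) (e m))
        = (\<Sum>m<k. \<Sum>l<N. (if ind l (S (Suc m)) then th l * dx m else 0) + (if ind l (S (Suc m)) then ph l * dy m else 0))"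
      unfolding tilt_eq stepf_def sum_distrib_right sum.distrib[symmetric]
      by (intro sum.cong refl) auto
    also have "\<dots> = (\<Sum>l<N. \<Sum>m<k. (if ind l (S (Suc m)) then th l * dx m else 0) + (if ind l (S (Suc m)) then ph l * dy m else 0))"
      by (rule sum.swap)
    also have "\<dots> = (\<Sum>l<N. th l * (fst (c (Nt S (real (Suc l) * d))) - fst (c (Nt S (real l * d))))
               + ph l * (snd (c (Nt S (real (Suc l) * d))) - snd (c (Nt S (real l * d)))))"
    proof (intro sum.cong refl)
      fix l assume l: "l \<in> {..<N}"
      have ab: "real l * d \<le> real (Suc l) * d" using d_pos by (intro mult_right_mono) auto
      have bk: "real (Suc l) * d < S (Suc k0)" using lN[of l] l Sk by auto
      have w1: "(\<Sum>m<Suc k0. if real l * d < S (Suc m) \<and> S (Suc m) \<le> real (Suc l) * d then fst (c (Suc m)) - fst (c m) else 0)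
          = fst (c (Nt S (real (Suc l) * d))) - fst (c (Nt S (real l * d)))"
        by (rule sum_window[OF S(1) ab bk, of "\<lambda>m. fst (c m)"])
      have w2: "(\<Sum>m<Suc k0. if real l * d < S (Suc m) \<and> S (Suc m) \<le> real (Suc l) * d then snd (c (Suc m)) - snd (c m) else 0)
          = snd (c (Nt S (real (Suc l) * d))) - snd (c (Nt S (real l * d)))"
        by (rule sum_window[OF S(1) ab bk, of "\<lambda>m. snd (c m)"])
      show "(\<Sum>m<k. (if ind l (S (Suc m)) then th l * dx m else 0) + (if ind l (S (Suc m)) then ph l * dy m else 0))
          = th l * (fst (c (Nt S (real (Suc l) * d))) - fst (c (Nt S (real l * d))))
               + ph l * (snd (c (Nt S (real (Suc l) * d))) - snd (c (Nt S (real l * d))))"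
        unfolding w1[symmetric] w2[symmetric] k_def sum.distrib sum_distrib_left
        by (intro arg_cong2[where f="(+)"] sum.cong refl) (auto simp: ind_def dx_def dy_def)
    qed
    finally show ?thesis .
  qed
  have part2: "(\<Sum>m<k. Cz (c m) (S m) (S (Suc m))) \<le> (\<Sum>l<N. \<kappa> l * d)"
  proof -
    have "(\<Sum>m<k. Cz (c m) (S m) (S (Suc m))) = (\<Sum>l<N. \<Sum>m<k. coefL (c m) l * ov (S m) (S (Suc m)) (real l * d) (real (Suc l) * d))"
      unfolding Cz_def by (rule sum.swap)
    also have "\<dots> \<le> (\<Sum>l<N. \<Sum>m<k. \<kappa> l * ov (S m) (S (Suc m)) (real l * d) (real (Suc l) * d))"
    proof (intro sum_mono)
      fix l m assume "l \<in> {..<N}" "m \<in> {..<k}"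
      then show "coefL (c m) l * ov (S m) (S (Suc m)) (real l * d) (real (Suc l) * d)
          \<le> \<kappa> l * ov (S m) (S (Suc m)) (real l * d) (real (Suc l) * d)"
        using kap[of l m] ov_nonneg[of "S m" "S (Suc m)" "real l * d" "real (Suc l) * d"]
        by (cases "0 < ov (S m) (S (Suc m)) (real l * d) (real (Suc l) * d)") (auto simp: k_def)
    qed
    also have "\<dots> = (\<Sum>l<N. \<kappa> l * d)"
    proof (intro sum.cong refl)
      fix l assume l: "l \<in> {..<N}"
      have ab: "real l * d \<le> real (Suc l) * d" using d_pos by (intro mult_right_mono) auto
      have "(\<Sum>m<k. ov (S m) (S (Suc m)) (real l * d) (real (Suc l) * d)) = ov (S 0) (S k) (real l * d) (real (Suc l) * d)"
        by (rule ov_sum[OF strict_mono_mono[OF S(1)] ab])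
      also have "\<dots> = d"
        using S(2) Sk lN[of l] l d_pos unfolding ov_def k_def by (auto simp: algebra_simps)
      finally show "(\<Sum>m<k. \<kappa> l * ov (S m) (S (Suc m)) (real l * d) (real (Suc l) * d)) = \<kappa> l * d"
        by (simp add: sum_distrib_left[symmetric])
    qed
    finally show ?thesis .
  qed
  show ?thesis
    using part1 part2 unfolding k_def sum_subtractf sum.distrib by simp
qed

end


lemma sq_identity:
  fixes a x :: real
  assumes "0 < x" "0 \<le> a" and that: "0 < a"
  shows "(1 - sqrt a / sqrt x) * x - a * (1 - sqrt a / sqrt x) / (1 - (1 - sqrt a / sqrt x)) = (sqrt a - sqrt x)^2"
proof -
  have sx: "sqrt x > 0" using assms by simp
  have sa: "sqrt a > 0" using that by simp
  have x: "x = sqrt x * sqrt x" using assms by simp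
  have a: "a = sqrt a * sqrt a" using assms by simp
  have "(1 - sqrt a / sqrt x) * x - a * (1 - sqrt a / sqrt x) / (1 - (1 - sqrt a / sqrt x))
      = (1 - sqrt a / sqrt x) * (sqrt x * sqrt x) - (sqrt a * sqrt a) * (1 - sqrt a / sqrt x) / (sqrt a / sqrt x)"
    using x a by simp
  also have "\<dots> = (sqrt a - sqrt x)^2"
    using sx sa by (simp add: field_simps power2_eq_square)
  finally show ?thesis .
qed

lemma opt_minus:
  fixes a x \<delta> :: real
  assumes "x < a" "0 \<le> x" "0 < \<delta>"
  shows "\<exists>\<theta>\<le>0. (sqrt a - sqrt x)^2 - \<delta> \<le> \<theta> * x - a * \<theta> / (1 - \<theta>)"
proof (cases "x = 0")
  case True
  have a: "0 < a" using assms by linarith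
  define \<theta> where "\<theta> = - a / \<delta>"
  have t: "\<theta> \<le> 0" using a assms unfolding \<theta>_def by simp
  have "- a * \<theta> / (1 - \<theta>) = a * a / (\<delta> + a)"
    unfolding \<theta>_def using a assms by (simp add: field_simps)
  moreover have "a - \<delta> \<le> a * a / (\<delta> + a)"
    using a assms by (simp add: field_simps)
  ultimately show ?thesis using True t a by (intro exI[of _ \<theta>]) (simp add: )
next
  case False
  then have x: "0 < x" using assms by simp
  have a: "0 < a" using assms by linarith
  define \<theta> where "\<theta> = 1 - sqrt a / sqrt x"
  have "sqrt x \<le> sqrt a" using assms by simp
  then have t: "\<theta> \<le> 0" unfolding \<theta>_def using x by (simp add: field_simps)
  have eq: "\<theta> * x - a * \<theta> / (1 - \<theta>) = (sqrt a - sqrt x)^2"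
    using sq_identity[OF x _ a] a unfolding \<theta>_def by simp
  show ?thesis using eq t assms by (intro exI[of _ \<theta>]) auto
qed

lemma opt_plus:
  fixes a x \<delta> :: real
  assumes "a < x" "0 \<le> a" "0 < \<delta>"
  shows "\<exists>\<theta>. 0 \<le> \<theta> \<and> \<theta> < 1 \<and> (sqrt a - sqrt x)^2 - \<delta> \<le> \<theta> * x - a * \<theta> / (1 - \<theta>)"
proof (cases "a = 0")
  case True
  have x: "0 < x" using assms by linarith
  define \<theta> where "\<theta> = max 0 (1 - \<delta> / x)"
  have t: "0 \<le> \<theta>" "\<theta> < 1" unfolding \<theta>_def using x assms by auto
  have "x - \<delta> \<le> \<theta> * x"
  proof (cases "1 - \<delta> / x \<le> 0")
    case True then have "x \<le> \<delta>" using x by (simp add: field_simps)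
    then show ?thesis using True unfolding \<theta>_def by simp
  next
    case False then show ?thesis unfolding \<theta>_def using x by (simp add: field_simps)
  qed
  then show ?thesis using True t x by (intro exI[of _ \<theta>]) (simp add: power2_eq_square)
next
  case False
  then have a: "0 < a" using assms by simp
  have x: "0 < x" using assms by linarith
  define \<theta> where "\<theta> = 1 - sqrt a / sqrt x"
  have "sqrt a < sqrt x" using assms by simp
  then have t: "0 \<le> \<theta>" "\<theta> < 1" unfolding \<theta>_def using x a by (auto simp: field_simps)
  have eq: "\<theta> * x - a * \<theta> / (1 - \<theta>) = (sqrt a - sqrt x)^2"
    using sq_identity[OF x _ a] a unfolding \<theta>_def by simp
  show ?thesis using eq t assms by (intro exI[of _ \<theta>]) auto
qed

lemma choose_theta:
  fixes Rm Rp xm xp L \<delta> :: real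
  assumes "0 \<le> Rm" "Rm \<le> Rp" "0 \<le> xp" "0 < L" "0 < \<delta>"
  defines "E \<equiv> (if 2 * Rm * L > xp then (sqrt (2 * Rm * L) - sqrt xp)^2
                 else if xm > 2 * Rp * L then (sqrt (2 * Rp * L) - sqrt xm)^2 else 0)"
  shows "\<exists>\<theta> \<kappa>. \<theta> < 1 \<and> (\<forall>r. Rm \<le> r \<and> r \<le> Rp \<longrightarrow> 2 * r * (\<theta> / (1 - \<theta>)) \<le> \<kappa>)
              \<and> (\<forall>\<Delta>. xm \<le> \<Delta> \<and> \<Delta> \<le> xp \<longrightarrow> E - \<delta> \<le> \<theta> * \<Delta> - \<kappa> * L)"
proof (cases "2 * Rm * L > xp")
  case True
  obtain \<theta> where t: "\<theta> \<le> 0" "(sqrt (2 * Rm * L) - sqrt xp)^2 - \<delta> \<le> \<theta> * xp - (2 * Rm * L) * \<theta> / (1 - \<theta>)"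
    using opt_minus[OF True assms(3) assms(5)] by blast
  have q: "\<theta> / (1 - \<theta>) \<le> 0" using t by (simp add: divide_nonpos_pos)
  have c1: "2 * r * (\<theta> / (1 - \<theta>)) \<le> 2 * Rm * (\<theta> / (1 - \<theta>))" if "Rm \<le> r \<and> r \<le> Rp" for r
    using q that by (intro mult_right_mono_neg) auto
  have c2: "E - \<delta> \<le> \<theta> * \<Delta> - 2 * Rm * (\<theta> / (1 - \<theta>)) * L" if D: "xm \<le> \<Delta> \<and> \<Delta> \<le> xp" for \<Delta>
  proof -
    have 1: "\<theta> * xp \<le> \<theta> * \<Delta>" using D t by (intro mult_left_mono_neg) auto
    have 2: "(2 * Rm * L) * \<theta> / (1 - \<theta>) = 2 * Rm * (\<theta> / (1 - \<theta>)) * L" by simp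
    have 3: "E = (sqrt (2 * Rm * L) - sqrt xp)^2" using True unfolding E_def by simp
    show ?thesis using 1 2 3 t(2) by linarith
  qed
  show ?thesis using c1 c2 t by (intro exI[of _ \<theta>] exI[of _ "2 * Rm * (\<theta> / (1 - \<theta>))"]) auto
next
  case False
  note F = False
  show ?thesis
  proof (cases "xm > 2 * Rp * L")
    case True
    have a0: "0 \<le> 2 * Rp * L" using assms by simp
    obtain \<theta> where t: "0 \<le> \<theta>" "\<theta> < 1" "(sqrt (2 * Rp * L) - sqrt xm)^2 - \<delta> \<le> \<theta> * xm - (2 * Rp * L) * \<theta> / (1 - \<theta>)"
      using opt_plus[OF True a0 assms(5)] by blast
    have q: "0 \<le> \<theta> / (1 - \<theta>)" using t by simp
    have c1: "2 * r * (\<theta> / (1 - \<theta>)) \<le> 2 * Rp * (\<theta> / (1 - \<theta>))" if "Rm \<le> r \<and> r \<le> Rp" for r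
      using q that by (intro mult_right_mono) auto
    have c2: "E - \<delta> \<le> \<theta> * \<Delta> - 2 * Rp * (\<theta> / (1 - \<theta>)) * L" if D: "xm \<le> \<Delta> \<and> \<Delta> \<le> xp" for \<Delta>
    proof -
      have 1: "\<theta> * xm \<le> \<theta> * \<Delta>" using D t by (intro mult_left_mono) auto
      have 2: "(2 * Rp * L) * \<theta> / (1 - \<theta>) = 2 * Rp * (\<theta> / (1 - \<theta>)) * L" by simp
      have 3: "E = (sqrt (2 * Rp * L) - sqrt xm)^2" using True F unfolding E_def by simp
      show ?thesis using 1 2 3 t(3) by linarith
    qed
    show ?thesis using c1 c2 t by (intro exI[of _ \<theta>] exI[of _ "2 * Rp * (\<theta> / (1 - \<theta>))"]) auto
  next
    case False
    show ?thesis
      by (intro exI[of _ 0] exI[of _ 0]) (use F False assms in \<open>auto simp: E_def\<close>)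
  qed
qed


declare comp_meas[measurable del]

lemma AE_EXPM_pos: "AE x in EXPM. 0 < x"
proof -
  have "AE x in lborel. x \<noteq> (0::real)" by (rule AE_lborel_singleton)
  then have "AE x in lborel. 0 < ennreal (exponential_density 1 x) \<longrightarrow> 0 < x"
    by eventually_elim (auto simp: exponential_density_def)
  then show ?thesis by (subst AE_density) auto
qed

lemma AE_EXPM_nn: "AE x in EXPM. 0 \<le> x"
proof -
  have "AE x in EXPM. 0 < x \<longrightarrow> 0 \<le> x" by (rule AE_I2) simp
  then show ?thesis by (rule AE_mp[OF AE_EXPM_pos])
qed

lemma AE_jump: "AE s in jump_meas. 0 < fst (fst s) \<and> 0 \<le> snd (fst s)"
proof -
  have sfE: "sigma_finite_measure EXPM" by (rule prob_space_imp_sigma_finite[OF prob_EXPM])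
  have sfU: "sigma_finite_measure UNI" by (rule prob_space_imp_sigma_finite[OF prob_UNI])
  interpret EE: pair_sigma_finite EXPM EXPM using sfE by (simp add: pair_sigma_finite_def)
  have sfEE: "sigma_finite_measure (EXPM \<Otimes>\<^sub>M EXPM)"
    by (rule prob_space_imp_sigma_finite) (intro prob_space_pair prob_EXPM)
  interpret EU: pair_sigma_finite "EXPM \<Otimes>\<^sub>M EXPM" UNI using sfEE sfU by (simp add: pair_sigma_finite_def)
  have "AE x in EXPM \<Otimes>\<^sub>M EXPM. 0 < fst x \<and> 0 \<le> snd x"
  proof (rule EE.AE_pair_measure)
    show "{x \<in> space (EXPM \<Otimes>\<^sub>M EXPM). 0 < fst x \<and> 0 \<le> snd x} \<in> sets (EXPM \<Otimes>\<^sub>M EXPM)"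
      by measurable
    have "AE x in EXPM. 0 < x \<longrightarrow> (AE y in EXPM. 0 < x \<and> 0 \<le> y)"
    proof (rule AE_I2, rule impI)
      fix x :: real assume x: "0 < x"
      have "AE y in EXPM. 0 \<le> y \<longrightarrow> 0 < x \<and> 0 \<le> y" by (rule AE_I2) (use x in auto)
      then show "AE y in EXPM. 0 < x \<and> 0 \<le> y" by (rule AE_mp[OF AE_EXPM_nn])
    qed
    from AE_mp[OF AE_EXPM_pos this]
    show "AE x in EXPM. AE y in EXPM. 0 < fst (x, y) \<and> 0 \<le> snd (x, y)" by simp
  qed
  then have "AE x in (EXPM \<Otimes>\<^sub>M EXPM) \<Otimes>\<^sub>M UNI. 0 < fst (fst x) \<and> 0 \<le> snd (fst x)"
  proof (intro EU.AE_pair_measure)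
    show "{x \<in> space ((EXPM \<Otimes>\<^sub>M EXPM) \<Otimes>\<^sub>M UNI). 0 < fst (fst x) \<and> 0 \<le> snd (fst x)} \<in> sets ((EXPM \<Otimes>\<^sub>M EXPM) \<Otimes>\<^sub>M UNI)"
      by measurable
  next
    assume a: "AE x in EXPM \<Otimes>\<^sub>M EXPM. 0 < fst x \<and> 0 \<le> snd x"
    show "AE x in EXPM \<Otimes>\<^sub>M EXPM. AE y in UNI. 0 < fst (fst (x, y)) \<and> 0 \<le> snd (fst (x, y))"
      by (rule AE_mp[OF a]) (auto intro: AE_I2)
  qed
  then show ?thesis unfolding jump_meas_eq .
qed

lemma AE_good: "AE \<omega> in Q_meas. \<forall>k. 0 < fst (fst (\<omega> k)) \<and> 0 \<le> snd (fst (\<omega> k))"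
proof (subst AE_all_countable, intro allI)
  fix k
  show "AE \<omega> in Q_meas. 0 < fst (fst (\<omega> k)) \<and> 0 \<le> snd (fst (\<omega> k))"
    unfolding Q_meas_def
    using AE_PiM_component[of UNIV "\<lambda>_. jump_meas" k "\<lambda>s. 0 < fst (fst s) \<and> 0 \<le> snd (fst s)"] AE_jump prob_jump
    by simp
qed

lemma jump_exp_int: "(\<integral>\<^sup>+s. ennreal (exp (- max 0 (snd (fst s)))) \<partial>jump_meas) = ennreal (1 / 2)"
proof -
  have sfE: "sigma_finite_measure EXPM" by (rule prob_space_imp_sigma_finite[OF prob_EXPM])
  have sfU: "sigma_finite_measure UNI" by (rule prob_space_imp_sigma_finite[OF prob_UNI])
  have m1: "(\<lambda>s. ennreal (exp (- max 0 (snd (fst s))))) \<in> borel_measurable ((EXPM \<Otimes>\<^sub>M EXPM) \<Otimes>\<^sub>M UNI)"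
    by measurable
  have "(\<integral>\<^sup>+s. ennreal (exp (- max 0 (snd (fst s)))) \<partial>jump_meas)
     = (\<integral>\<^sup>+x. \<integral>\<^sup>+u. ennreal (exp (- max 0 (snd x))) \<partial>UNI \<partial>(EXPM \<Otimes>\<^sub>M EXPM))"
    unfolding jump_meas_eq using sigma_finite_measure.nn_integral_fst[OF sfU m1] by simp
  also have "\<dots> = (\<integral>\<^sup>+x. ennreal (exp (- max 0 (snd x))) \<partial>(EXPM \<Otimes>\<^sub>M EXPM))"
    using prob_space.emeasure_space_1[OF prob_UNI] by (simp add: nn_integral_const)
  also have "\<dots> = (\<integral>\<^sup>+h. \<integral>\<^sup>+e. ennreal (exp (- max 0 e)) \<partial>EXPM \<partial>EXPM)"
    by (subst sigma_finite_measure.nn_integral_fst[OF sfE, symmetric]) auto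
  also have "\<dots> = (\<integral>\<^sup>+h. ennreal (1 / 2) \<partial>EXPM)"
    using E_int[of "-1"] by simp
  also have "\<dots> = ennreal (1 / 2)"
    using prob_space.emeasure_space_1[OF prob_EXPM] by (simp add: nn_integral_const)
  finally show ?thesis .
qed

lemma jm_meas: "(\<lambda>s. ennreal (exp (- max 0 (snd (fst s))))) \<in> borel_measurable jump_meas"
  unfolding jump_meas_eq by measurable

lemma expsum_int:
  "(\<integral>\<^sup>+\<omega>. ennreal (exp (- (\<Sum>m<k. max 0 (snd (fst (\<omega> m)))))) \<partial>Q_meas) \<le> ennreal ((1 / 2) ^ k)"
proof (induction k)
  case 0
  show ?case using prob_space.emeasure_space_1[OF prob_Q] by simp
next
  case (Suc k)
  note comp_meas[measurable]
  have sfQ: "sigma_finite_measure Q_meas" by (rule prob_space_imp_sigma_finite[OF prob_Q])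
  have cn: "(\<lambda>(s, \<omega>). case_nat s \<omega>) \<in> jump_meas \<Otimes>\<^sub>M Q_meas \<rightarrow>\<^sub>M Q_meas"
    unfolding Q_meas_def by measurable
  define G where "G k \<omega> = exp (- (\<Sum>m<k. max 0 (snd (fst (\<omega> m)))))" for k and \<omega> :: omega
  have Gm[measurable]: "G k \<in> borel_measurable Q_meas" for k unfolding G_def by measurable
  have dec: "G (Suc k) (case_nat s \<omega>') = exp (- max 0 (snd (fst s))) * G k \<omega>'" for s \<omega>'
    unfolding G_def sum.lessThan_Suc_shift by (simp add: exp_add[symmetric])
  have "(\<integral>\<^sup>+\<omega>. ennreal (G (Suc k) \<omega>) \<partial>Q_meas)
      = (\<integral>\<^sup>+\<omega>. ennreal (G (Suc k) \<omega>) \<partial>distr (jump_meas \<Otimes>\<^sub>M Q_meas) Q_meas (\<lambda>(s, \<omega>). case_nat s \<omega>))"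
    using JS.PiM_iter by (simp add: Q_meas_def)
  also have "\<dots> = (\<integral>\<^sup>+x. ennreal (G (Suc k) ((\<lambda>(s, \<omega>). case_nat s \<omega>) x)) \<partial>(jump_meas \<Otimes>\<^sub>M Q_meas))"
    by (rule nn_integral_distr[OF cn]) simp
  also have "\<dots> = (\<integral>\<^sup>+s. \<integral>\<^sup>+\<omega>'. ennreal (G (Suc k) (case_nat s \<omega>')) \<partial>Q_meas \<partial>jump_meas)"
  proof (subst sigma_finite_measure.nn_integral_fst[OF sfQ, symmetric])
    show "(\<lambda>x. ennreal (G (Suc k) ((\<lambda>(s, \<omega>). case_nat s \<omega>) x))) \<in> borel_measurable (jump_meas \<Otimes>\<^sub>M Q_meas)"
      using measurable_compose[OF cn Gm] by simp
  qed simp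
  also have "\<dots> = (\<integral>\<^sup>+s. ennreal (exp (- max 0 (snd (fst s)))) * (\<integral>\<^sup>+\<omega>'. ennreal (G k \<omega>') \<partial>Q_meas) \<partial>jump_meas)"
    unfolding dec by (intro nn_integral_cong) (simp add: ennreal_mult' nn_integral_cmult)
  also have "\<dots> = (\<integral>\<^sup>+s. ennreal (exp (- max 0 (snd (fst s)))) \<partial>jump_meas) * (\<integral>\<^sup>+\<omega>'. ennreal (G k \<omega>') \<partial>Q_meas)"
    by (rule nn_integral_multc) (rule jm_meas)
  also have "\<dots> \<le> ennreal (1 / 2) * ennreal ((1 / 2) ^ k)"
    unfolding jump_exp_int using Suc.IH unfolding G_def by (intro mult_left_mono) auto
  also have "\<dots> = ennreal ((1 / 2) ^ Suc k)"
  proof -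
    have e1: "ennreal (1/2) * ennreal ((1/2)^k) = ennreal (1/2 * (1/2)^k)" by (rule ennreal_mult'[symmetric]) simp
    have e2: "1/2 * (1/2::real)^k = (1/2)^Suc k" by simp
    show ?thesis unfolding e1 e2 ..
  qed
  finally show ?case unfolding G_def .
qed

lemma Z_null:
  "emeasure Q_meas {\<omega> \<in> space Q_meas. \<forall>k. (\<Sum>m<k. max 0 (snd (fst (\<omega> m)))) \<le> D} = 0"
proof -
  note comp_meas[measurable]
  interpret QP: prob_space Q_meas by (rule prob_Q)
  define Z where "Z = {\<omega> \<in> space Q_meas. \<forall>k. (\<Sum>m<k. max 0 (snd (fst (\<omega> m)))) \<le> D}"
  have Zs: "Z \<in> sets Q_meas" unfolding Z_def by measurable
  have bound: "emeasure Q_meas Z \<le> ennreal (exp D * (1 / 2) ^ k)" for k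
  proof -
    have "emeasure Q_meas Z = (\<integral>\<^sup>+\<omega>. indicator Z \<omega> \<partial>Q_meas)" using Zs by simp
    also have "\<dots> \<le> (\<integral>\<^sup>+\<omega>. ennreal (exp D) * ennreal (exp (- (\<Sum>m<k. max 0 (snd (fst (\<omega> m)))))) \<partial>Q_meas)"
    proof (intro nn_integral_mono)
      fix \<omega> assume "\<omega> \<in> space Q_meas"
      show "indicator Z \<omega> \<le> ennreal (exp D) * ennreal (exp (- (\<Sum>m<k. max 0 (snd (fst (\<omega> m))))))"
      proof (cases "\<omega> \<in> Z")
        case True
        then have "(\<Sum>m<k. max 0 (snd (fst (\<omega> m)))) \<le> D" unfolding Z_def by auto
        then have "1 \<le> exp D * exp (- (\<Sum>m<k. max 0 (snd (fst (\<omega> m)))))"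
          by (simp add: exp_minus field_simps)
        then show ?thesis using True by (simp add: ennreal_mult'[symmetric])
      qed simp
    qed
    also have "\<dots> = ennreal (exp D) * (\<integral>\<^sup>+\<omega>. ennreal (exp (- (\<Sum>m<k. max 0 (snd (fst (\<omega> m)))))) \<partial>Q_meas)"
      by (rule nn_integral_cmult) measurable
    also have "\<dots> \<le> ennreal (exp D) * ennreal ((1 / 2) ^ k)"
      by (intro mult_left_mono expsum_int) auto
    also have "\<dots> = ennreal (exp D * (1 / 2) ^ k)" by (simp add: ennreal_mult'[symmetric])
    finally show ?thesis .
  qed
  have fin: "emeasure Q_meas Z \<noteq> \<top>" by (rule QP.emeasure_finite)
  have mb: "measure Q_meas Z \<le> exp D * (1 / 2) ^ k" for k
    using bound[of k] fin by (simp add: measure_def enn2real_leI)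
  have "(\<lambda>k. exp D * (1 / 2) ^ k) \<longlonglongrightarrow> exp D * 0"
    by (intro tendsto_mult tendsto_const LIMSEQ_power_zero) auto
  then have "measure Q_meas Z \<le> 0"
    using mb by (intro LIMSEQ_le_const[where X="\<lambda>k. exp D * (1/2)^k"]) auto
  then have "measure Q_meas Z = 0" by (simp add: measure_nonneg antisym)
  then show ?thesis unfolding Z_def[symmetric] by (simp add: QP.emeasure_eq_measure)
qed


lemma outer_le:
  assumes "A \<subseteq> B" "B \<in> sets M"
  shows "outer_prob M A \<le> measure M B"
  unfolding outer_prob_def
proof (rule cInf_lower)
  show "measure M B \<in> measure M ` {B \<in> sets M. A \<subseteq> B}" using assms by auto
  show "bdd_below (measure M ` {B \<in> sets M. A \<subseteq> B})"
    by (rule bdd_belowI[of _ 0]) auto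
qed

lemma le_by_exp_eps:
  fixes x y :: real
  assumes y: "0 < y" and h: "\<And>\<epsilon>. 0 < \<epsilon> \<Longrightarrow> x \<le> y * exp \<epsilon>"
  shows "x \<le> y"
proof (rule field_le_epsilon)
  fix e :: real assume e: "0 < e"
  have pos: "0 < 1 + e / y" using e y by (intro add_pos_pos) auto
  have "0 < ln (1 + e / y)" using e y by (simp add: ln_gt_zero)
  then have "x \<le> y * exp (ln (1 + e / y))" by (rule h)
  also have "\<dots> = y + e" using pos y by (simp add: field_simps)
  finally show "x \<le> y + e" .
qed

lemma chain_ch:
  assumes "\<And>k. 0 \<le> snd (fst (\<omega> k))"
  shows "chain z0 \<omega> m = ch z0 \<omega> m"
proof (induction m)
  case 0 then show ?case by simp
next
  case (Suc m)
  have "max 0 (snd (fst (\<omega> m))) = snd (fst (\<omega> m))" using assms[of m] by simp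
  then show ?case using Suc by (simp add: Let_def)
qed

lemma hold_hd:
  assumes "\<And>k. 0 \<le> snd (fst (\<omega> k))"
  shows "hold z0 \<omega> m = hd z0 \<omega> m"
  unfolding hold_def hd_def chain_ch[OF assms] ..

lemma ch_sum:
  "fst (ch z0 \<omega> k) + snd (ch z0 \<omega> k) = fst z0 + snd z0 + (\<Sum>m<k. max 0 (snd (fst (\<omega> m))))"
  by (induction k) auto

lemma hd_pos:
  assumes "0 \<le> fst z0" "0 \<le> snd z0" "0 < fst (fst (\<omega> m))"
  shows "0 < hd z0 \<omega> m"
proof -
  have "1 \<le> rateR (ch z0 \<omega> m)" using ch_nonneg[OF assms(1,2)] rateR_ge1 by blast
  then show ?thesis unfolding hd_def using assms(3) by simp
qed

lemma Sf_strict: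
  assumes "0 \<le> fst z0" "0 \<le> snd z0" "\<And>k. 0 < fst (fst (\<omega> k))"
  shows "strict_mono (Sf z0 t0 \<omega>)"
proof (rule strict_mono_Suc_iff[THEN iffD2], intro allI)
  fix k
  show "Sf z0 t0 \<omega> k < Sf z0 t0 \<omega> (Suc k)"
    unfolding Sf_def using hd_pos[of z0 \<omega> k, OF assms(1,2) assms(3)[of k]] by simp
qed

lemma proc_eq:
  assumes z: "0 \<le> fst z0" "0 \<le> snd z0" and e: "\<And>k. 0 \<le> snd (fst (\<omega> k))"
  shows "proc z0 \<omega> t = ch z0 \<omega> (Nt (Sf z0 0 \<omega>) t)"
proof -
  have "(\<lambda>k. rateR (chain z0 \<omega> k) \<le> 0 \<or> t < (\<Sum>j\<le>k. hold z0 \<omega> j)) = (\<lambda>k. t < Sf z0 0 \<omega> (Suc k))"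
  proof (rule ext)
    fix k
    have "1 \<le> rateR (chain z0 \<omega> k)" unfolding chain_ch[OF e] using ch_nonneg[OF z] rateR_ge1 by blast
    moreover have "(\<Sum>j\<le>k. hold z0 \<omega> j) = Sf z0 0 \<omega> (Suc k)"
      unfolding Sf_def hold_hd[OF e] lessThan_Suc_atMost[symmetric] by simp
    ultimately show "(rateR (chain z0 \<omega> k) \<le> 0 \<or> t < (\<Sum>j\<le>k. hold z0 \<omega> j)) = (t < Sf z0 0 \<omega> (Suc k))"
      by auto
  qed
  then show ?thesis unfolding proc_def Nt_def chain_ch[OF e] by simp
qed

lemma proc_0:
  assumes "0 < fst (fst (\<omega> 0))"
  shows "proc z0 \<omega> 0 = z0"
proof -
  have "rateR (chain z0 \<omega> 0) \<le> 0 \<or> 0 < (\<Sum>j\<le>0. hold z0 \<omega> j)"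
    using assms by (cases "rateR z0 \<le> 0") (auto simp: hold_def)
  then have "(LEAST k. rateR (chain z0 \<omega> k) \<le> 0 \<or> 0 < (\<Sum>j\<le>k. hold z0 \<omega> j)) = 0"
    by (rule Least_eq_0)
  then show ?thesis unfolding proc_def by simp
qed

context tiltp begin

lemma Wterm_zero:
  assumes S: "strict_mono (Sf z0 t0 \<omega>)" and m: "real N * d \<le> Sf z0 t0 \<omega> m"
  shows "Wterm z0 t0 \<omega> m = 0"
proof -
  have lt: "Sf z0 t0 \<omega> m < Sf z0 t0 \<omega> (Suc m)" using S by (simp add: strict_mono_Suc_iff)
  have lN: "real (Suc l) * d \<le> real N * d" if "l < N" for l
    using that d_pos by (intro mult_right_mono) auto
  have "\<not> ind l (Sf z0 t0 \<omega> (Suc m))" if "l < N" for l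
    using lN[OF that] m lt unfolding ind_def by linarith
  then have s0: "stepf c (Sf z0 t0 \<omega> (Suc m)) = 0" for c by (intro stepf_zero) auto
  have "ov (Sf z0 t0 \<omega> m) (Sf z0 t0 \<omega> (Suc m)) (real l * d) (real (Suc l) * d) = 0" if "l < N" for l
  proof -
    have "min (Sf z0 t0 \<omega> (Suc m)) (real (Suc l) * d) - max (Sf z0 t0 \<omega> m) (real l * d) \<le> 0"
      using min.cobounded2[of "Sf z0 t0 \<omega> (Suc m)" "real (Suc l) * d"]
        max.cobounded1[of "Sf z0 t0 \<omega> m" "real l * d"] lN[OF that] m by linarith
    then show ?thesis unfolding ov_def by (rule max_absorb1)
  qed
  then have c0: "Cz (ch z0 \<omega> m) (Sf z0 t0 \<omega> m) (Sf z0 t0 \<omega> (Suc m)) = 0"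
    unfolding Cz_def by (intro sum.neutral) auto
  show ?thesis unfolding Wterm_def tilt_def s0 c0 by simp
qed

lemma W_stable:
  assumes "\<And>m. k \<le> m \<Longrightarrow> Wterm z0 t0 \<omega> m = 0" "k \<le> k'"
  shows "W k' z0 t0 \<omega> = W k z0 t0 \<omega>"
proof -
  have "(\<Sum>m<k'. Wterm z0 t0 \<omega> m) = (\<Sum>m<k. Wterm z0 t0 \<omega> m)"
    using assms by (intro sum.mono_neutral_right) auto
  then show ?thesis unfolding W_def by simp
qed

end


definition Bd :: "real \<Rightarrow> real \<Rightarrow> real" where "Bd M T = M * (1 + 2 * T powr (-2/3))"

lemma Gamma_bounds:
  assumes g: "g \<in> Gamma M T f n" and M: "0 < M" and s: "0 \<le> s" "s \<le> 1"
  shows "0 \<le> fst g s \<and> fst g s \<le> Bd M T \<and> 0 \<le> snd g s \<and> snd g s \<le> Bd M T"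
proof -
  have gG: "fst g \<in> G_set M T" "snd g \<in> G_set M T" using g unfolding Gamma_def by (auto simp: mem_Times_iff)
  have E: "fst g \<in> E_space" "snd g \<in> E_space" using gG unfolding G_set_def by auto
  have up: "fst g s \<le> M * (s + 2 * T powr (-2/3))" "snd g s \<le> M * (s + 2 * T powr (-2/3))"
    using gG s unfolding G_set_def by auto
  have bd: "M * (s + 2 * T powr (-2/3)) \<le> Bd M T" unfolding Bd_def using M s by (intro mult_left_mono) auto
  have mo: "mono (fst g)" "mono (snd g)" using E unfolding E_space_def by blast+
  have z0: "fst g 0 = 0" "snd g 0 = 0" using E unfolding E_space_def by blast+
  have "fst g 0 \<le> fst g s" "snd g 0 \<le> snd g s" using monoD[OF mo(1) s(1)] monoD[OF mo(2) s(1)] by auto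
  then show ?thesis using up z0 bd by linarith
qed

lemma rateR_le: assumes ab: "0 \<le> a" "0 \<le> b" shows "rateR (a, b) \<le> a + b + 1"
proof -
  have "(a + 1) * 1 \<le> (a + 1) * (b + 1)" using ab by (intro mult_left_mono) auto
  then have 1: "(a + 1) / (b + 1) \<le> a + 1" using ab by (simp add: divide_le_eq)
  have "(b + 1) * 1 \<le> (b + 1) * (a + 1)" using ab by (intro mult_left_mono) auto
  then have 2: "(b + 1) / (a + 1) \<le> b + 1" using ab by (simp add: divide_le_eq)
  show ?thesis unfolding rateR_def using 1 2 ab by simp
qed

lemma rateRX_bounds: "0 \<le> a \<Longrightarrow> 0 \<le> b \<Longrightarrow> 0 \<le> rateRX (a, b) \<and> rateRX (a, b) \<le> a + b + 1"
proof -
  assume ab: "0 \<le> a" "0 \<le> b"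
  have R: "1 \<le> rateR (a, b)" "rateR (a, b) \<le> a + b + 1" using rateR_ge1[of "(a,b)"] rateR_le ab by auto
  have P: "0 \<le> dirP (a, b)" "dirP (a, b) \<le> 1" using dirP_bounds[of "(a,b)"] ab by auto
  have "rateR (a, b) * dirP (a, b) \<le> rateR (a, b) * 1" using R P by (intro mult_left_mono) auto
  then have "rateR (a, b) * dirP (a, b) \<le> a + b + 1" using R by linarith
  moreover have "0 \<le> rateR (a, b) * dirP (a, b)" using R P by simp
  ultimately show ?thesis unfolding rateRX_def by simp
qed

lemma rateRY_bounds: "0 \<le> a \<Longrightarrow> 0 \<le> b \<Longrightarrow> 0 \<le> rateRY (a, b) \<and> rateRY (a, b) \<le> a + b + 1"
proof -
  assume ab: "0 \<le> a" "0 \<le> b"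
  have R: "1 \<le> rateR (a, b)" "rateR (a, b) \<le> a + b + 1" using rateR_ge1[of "(a,b)"] rateR_le ab by auto
  have P: "0 \<le> 1 - dirP (a, b)" "1 - dirP (a, b) \<le> 1" using dirP_bounds[of "(a,b)"] ab by auto
  have "rateR (a, b) * (1 - dirP (a, b)) \<le> rateR (a, b) * 1" using R P by (intro mult_left_mono) auto
  then have "rateR (a, b) * (1 - dirP (a, b)) \<le> a + b + 1" using R by linarith
  moreover have "0 \<le> rateR (a, b) * (1 - dirP (a, b))" using R P by simp
  ultimately show ?thesis unfolding rateRY_def by simp
qed

lemma scaleR_evalp: "T *\<^sub>R evalp g s = (T * fst g s, T * snd g s)"
  by (simp add: evalp_def)

locale gam =
  fixes M T :: real and f :: path2 and n :: nat
  assumes M: "0 < M" and T: "0 < T"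
begin

abbreviation "\<Gamma> \<equiv> Gamma M T f n"

definition RS :: "(real \<times> real \<Rightarrow> real) \<Rightarrow> real set \<Rightarrow> real set" where
  "RS Rf I = {Rf (T *\<^sub>R evalp g s) | s g. s \<in> I \<and> g \<in> \<Gamma>}"

lemma RS_bdd:
  assumes I: "I \<subseteq> {0..1}" and Rf: "Rf = rateRX \<or> Rf = rateRY"
  shows "bdd_below (RS Rf I)" "bdd_above (RS Rf I)" "\<And>x. x \<in> RS Rf I \<Longrightarrow> 0 \<le> x"
proof -
  have b: "0 \<le> Rf (T *\<^sub>R evalp g s) \<and> Rf (T *\<^sub>R evalp g s) \<le> T * Bd M T + T * Bd M T + 1" if "s \<in> I" "g \<in> \<Gamma>" for s g
  proof -
    have gb: "0 \<le> fst g s \<and> fst g s \<le> Bd M T \<and> 0 \<le> snd g s \<and> snd g s \<le> Bd M T"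
      using Gamma_bounds[OF that(2) M] that(1) I by auto
    have nn: "0 \<le> T * fst g s" "0 \<le> T * snd g s" using gb T by auto
    have le: "T * fst g s \<le> T * Bd M T" "T * snd g s \<le> T * Bd M T" using gb T by (auto intro: mult_left_mono)
    show ?thesis using Rf rateRX_bounds[OF nn] rateRY_bounds[OF nn] le unfolding scaleR_evalp by auto
  qed
  show "bdd_below (RS Rf I)" unfolding RS_def by (rule bdd_belowI[of _ 0]) (use b in auto)
  show "bdd_above (RS Rf I)" unfolding RS_def by (rule bdd_aboveI[of _ "T * Bd M T + T * Bd M T + 1"]) (use b in auto)
  show "\<And>x. x \<in> RS Rf I \<Longrightarrow> 0 \<le> x" unfolding RS_def using b by auto
qed

lemma Rminus_RS: "Rminus Rf I \<Gamma> T = Inf (RS Rf I)" unfolding Rminus_def RS_def ..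
lemma Rplus_RS: "Rplus Rf I \<Gamma> T = Sup (RS Rf I)" unfolding Rplus_def RS_def ..

lemma R_between:
  assumes I: "I \<subseteq> {0..1}" and Rf: "Rf = rateRX \<or> Rf = rateRY" and s: "s \<in> I" and g: "g \<in> \<Gamma>"
  shows "Rminus Rf I \<Gamma> T \<le> Rf (T *\<^sub>R evalp g s) \<and> Rf (T *\<^sub>R evalp g s) \<le> Rplus Rf I \<Gamma> T"
proof -
  have m: "Rf (T *\<^sub>R evalp g s) \<in> RS Rf I" unfolding RS_def using s g by blast
  show ?thesis unfolding Rminus_RS Rplus_RS
    using cInf_lower[OF m RS_bdd(1)[OF I Rf]] cSup_upper[OF m RS_bdd(2)[OF I Rf]] by auto
qed

lemma R_facts:
  assumes I: "I \<subseteq> {0..1}" "I \<noteq> {}" and Rf: "Rf = rateRX \<or> Rf = rateRY" and ne: "\<Gamma> \<noteq> {}"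
  shows "0 \<le> Rminus Rf I \<Gamma> T" "Rminus Rf I \<Gamma> T \<le> Rplus Rf I \<Gamma> T"
proof -
  obtain s where s: "s \<in> I" using I by auto
  obtain g where g: "g \<in> \<Gamma>" using ne by auto
  have ne': "RS Rf I \<noteq> {}" unfolding RS_def using s g by blast
  show "0 \<le> Rminus Rf I \<Gamma> T" unfolding Rminus_RS
    by (rule cInf_greatest[OF ne']) (rule RS_bdd(3)[OF I(1) Rf])
  show "Rminus Rf I \<Gamma> T \<le> Rplus Rf I \<Gamma> T" using R_between[OF I(1) Rf s g] by linarith
qed

lemma CS_bdd:
  assumes s: "0 \<le> s" "s \<le> 1" and c: "c = fst \<or> c = snd"
  shows "bdd_below {c g s | g. g \<in> \<Gamma>}" "bdd_above {c g s | g. g \<in> \<Gamma>}"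
proof -
  have b: "0 \<le> c g s \<and> c g s \<le> Bd M T" if "g \<in> \<Gamma>" for g
    using Gamma_bounds[OF that M s] c by auto
  show "bdd_below {c g s | g. g \<in> \<Gamma>}" by (rule bdd_belowI[of _ 0]) (use b in auto)
  show "bdd_above {c g s | g. g \<in> \<Gamma>}" by (rule bdd_aboveI[of _ "Bd M T"]) (use b in auto)
qed

lemma c_between:
  assumes s: "0 \<le> s" "s \<le> 1" and c: "c = fst \<or> c = snd" and g: "g \<in> \<Gamma>"
  shows "cminus c s \<Gamma> \<le> c g s \<and> c g s \<le> cplus c s \<Gamma>"
proof -
  have m: "c g s \<in> {c g s | g. g \<in> \<Gamma>}" using g by blast
  show ?thesis unfolding cminus_def cplus_def
    using cInf_lower[OF m CS_bdd(1)[OF s c]] cSup_upper[OF m CS_bdd(2)[OF s c]] by auto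
qed

lemma mono_g:
  assumes g: "g \<in> \<Gamma>" and c: "c = fst \<or> c = snd" and st: "s \<le> t"
  shows "c g s \<le> c g t"
proof -
  have "g \<in> E2" using g unfolding Gamma_def by auto
  then have "fst g \<in> E_space" "snd g \<in> E_space" unfolding E2_def by (auto simp: mem_Times_iff)
  then have "mono (fst g)" "mono (snd g)" unfolding E_space_def by blast+
  then show ?thesis using c st by (auto dest: monoD)
qed

lemma xp_nonneg:
  assumes s: "0 \<le> a" "a \<le> b" "b \<le> 1" and c: "c = fst \<or> c = snd" and ne: "\<Gamma> \<noteq> {}"
  shows "0 \<le> cplus c b \<Gamma> - cminus c a \<Gamma>"
proof -
  obtain g where g: "g \<in> \<Gamma>" using ne by auto
  have "cminus c a \<Gamma> \<le> c g a" using c_between[of a c g] s c g by auto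
  moreover have "c g b \<le> cplus c b \<Gamma>" using c_between[of b c g] s c g by auto
  moreover have "c g a \<le> c g b" using mono_g[OF g c s(2)] .
  ultimately show ?thesis by linarith
qed

end


declare comp_meas[measurable]

lemma choose_comp:
  assumes "0 \<le> Rminus Rf I F T" "Rminus Rf I F T \<le> Rplus Rf I F T"
    "0 \<le> cplus c (Sup I) F - cminus c (Inf I) F" "0 < Sup I - Inf I" "0 < \<delta>"
  shows "\<exists>\<theta> \<kappa>. \<theta> < 1 \<and> (\<forall>r. Rminus Rf I F T \<le> r \<and> r \<le> Rplus Rf I F T \<longrightarrow> 2 * r * (\<theta> / (1 - \<theta>)) \<le> \<kappa>)
     \<and> (\<forall>\<Delta>. cminus c (Sup I) F - cplus c (Inf I) F \<le> \<Delta> \<and> \<Delta> \<le> cplus c (Sup I) F - cminus c (Inf I) F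
          \<longrightarrow> calE Rf c I F T - \<delta> \<le> \<theta> * \<Delta> - \<kappa> * (Sup I - Inf I))"
  using choose_theta[OF assms, of "cminus c (Sup I) F - cplus c (Inf I) F"]
  unfolding calE_def Let_def by simp

lemma Ij_props:
  assumes n: "0 < n" and j: "Suc j \<le> n"
  shows "Ij n j \<subseteq> {0..1}" "Ij n j \<noteq> {}" "Inf (Ij n j) = real j / real n" "Sup (Ij n j) = real (Suc j) / real n"
    "Sup (Ij n j) - Inf (Ij n j) = 1 / real n"
proof -
  have le: "real j / real n \<le> real (Suc j) / real n" using n by (simp add: divide_right_mono)
  have le1: "real (Suc j) / real n \<le> 1" using n j by simp
  show "Ij n j \<subseteq> {0..1}" unfolding Ij_def using le1 by auto
  show "Ij n j \<noteq> {}" unfolding Ij_def using le by auto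
  show i: "Inf (Ij n j) = real j / real n" unfolding Ij_def using le by simp
  show s: "Sup (Ij n j) = real (Suc j) / real n" unfolding Ij_def using le by simp
  show "Sup (Ij n j) - Inf (Ij n j) = 1 / real n" unfolding i s using n by (simp add: field_simps)
qed

lemma markov_W:
  assumes "0 < c" "(\<integral>\<^sup>+\<omega>. ennreal (Wf \<omega>) \<partial>Q_meas) \<le> 1" "Wf \<in> borel_measurable Q_meas"
  shows "emeasure Q_meas {\<omega> \<in> space Q_meas. c \<le> Wf \<omega>} \<le> ennreal (1 / c)"
proof -
  have s: "{\<omega> \<in> space Q_meas. c \<le> Wf \<omega>} \<in> sets Q_meas" using assms(3) by measurable
  have "emeasure Q_meas {\<omega> \<in> space Q_meas. c \<le> Wf \<omega>} = (\<integral>\<^sup>+\<omega>. indicator {\<omega> \<in> space Q_meas. c \<le> Wf \<omega>} \<omega> \<partial>Q_meas)"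
    using s by simp
  also have "\<dots> \<le> (\<integral>\<^sup>+\<omega>. ennreal (1 / c) * ennreal (Wf \<omega>) \<partial>Q_meas)"
  proof (intro nn_integral_mono)
    fix \<omega> assume "\<omega> \<in> space Q_meas"
    show "indicator {\<omega> \<in> space Q_meas. c \<le> Wf \<omega>} \<omega> \<le> ennreal (1 / c) * ennreal (Wf \<omega>)"
    proof (cases "c \<le> Wf \<omega>")
      case True
      then have "1 \<le> 1 / c * Wf \<omega>" using assms(1) by (simp add: field_simps)
      moreover have "ennreal (1 / c) * ennreal (Wf \<omega>) = ennreal (1 / c * Wf \<omega>)"
        by (rule ennreal_mult'[symmetric]) (use assms(1) in simp)
      ultimately show ?thesis by (simp split: split_indicator)
    qed (simp split: split_indicator)
  qed
  also have "\<dots> = ennreal (1 / c) * (\<integral>\<^sup>+\<omega>. ennreal (Wf \<omega>) \<partial>Q_meas)"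
    by (rule nn_integral_cmult) (use assms(3) in measurable)
  also have "\<dots> \<le> ennreal (1 / c) * 1" by (intro mult_left_mono assms(2)) auto
  finally show ?thesis by simp
qed


theorem proposition2p3:
  fixes f :: path2 and n i :: nat and T M \<theta> :: real and z :: "real \<times> real"
  assumes "f \<in> E2" and "T > 1" and "M > 1"
    and "0 < \<theta>" and "\<theta> \<le> 1"
    and "i < nat \<lfloor>\<theta> * real n\<rfloor>"
    and "supnorm2 (z - evalp f (real i / real n)) < 1 / (real n)^2"
  shows "outer_prob Q_meas
           {\<omega> \<in> space Q_meas.
              restr_in (\<lambda>s. (1 / T) *\<^sub>R proc (T *\<^sub>R z) \<omega> (s * T - (real i / real n) * T))
                       (Gamma M T f n) {real i / real n .. \<theta>}}
         \<le> exp (- T * (\<Sum>j = i..<nat \<lfloor>\<theta> * real n\<rfloor>.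
                     calE_X (Ij n j) (Gamma M T f n) T + calE_Y (Ij n j) (Gamma M T f n) T))"
proof -
  define K where "K = nat \<lfloor>\<theta> * real n\<rfloor>"
  have iK: "i < K" using assms(6) unfolding K_def .
  have T0: "0 < T" using assms(2) by simp
  have n: "0 < n"
  proof (rule ccontr)
    assume "\<not> 0 < n" then have "n = 0" by simp
    then show False using iK unfolding K_def by simp
  qed
  have Kle: "real K \<le> \<theta> * real n"
  proof -
    have "0 \<le> \<lfloor>\<theta> * real n\<rfloor>" using assms(4) by simp
    then have "real K = real_of_int \<lfloor>\<theta> * real n\<rfloor>" unfolding K_def by simp
    also have "\<dots> \<le> \<theta> * real n" by (rule of_int_floor_le)
    finally show ?thesis .
  qed
  have Kn: "K \<le> n"
  proof -
    have "\<theta> * real n \<le> real n" using mult_right_mono[OF assms(5), of "real n"] by simp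
    then show ?thesis using Kle by linarith
  qed
  have Kth: "real K / real n \<le> \<theta>" using Kle n by (simp add: divide_le_eq mult.commute)
  define Nn where "Nn = K - i"
  have Nn: "0 < Nn" "K = i + Nn" using iK unfolding Nn_def by auto
  define d where "d = T / real n"
  have d: "0 < d" unfolding d_def using T0 n by simp
  define \<Gamma> where "\<Gamma> = Gamma M T f n"
  interpret G: gam M T f n using assms by unfold_locales auto
  define z0 where "z0 = T *\<^sub>R z"
  define path where "path \<omega> s = (1 / T) *\<^sub>R proc z0 \<omega> (s * T - real i / real n * T)" for \<omega> s
  define A where "A = {\<omega> \<in> space Q_meas. restr_in (path \<omega>) \<Gamma> {real i / real n..\<theta>}}"
  define Es where "Es = (\<Sum>j = i..<K. calE_X (Ij n j) \<Gamma> T + calE_Y (Ij n j) \<Gamma> T)"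
  have main: "outer_prob Q_meas A \<le> exp (- T * Es) * exp \<epsilon>" if \<epsilon>: "0 < \<epsilon>" for \<epsilon>
  proof (cases "A = {}")
    case True
    have "outer_prob Q_meas A \<le> measure Q_meas {}" using True by (intro outer_le) auto
    moreover have "0 < exp (- T * Es) * exp \<epsilon>" by simp
    ultimately show ?thesis unfolding measure_empty by linarith
  next
    case False
    then obtain \<omega>0 where "\<omega>0 \<in> A" by auto
    then obtain g0 where g0: "g0 \<in> \<Gamma>" unfolding A_def restr_in_def by auto
    then have ne: "\<Gamma> \<noteq> {}" by auto
    define \<delta> where "\<delta> = \<epsilon> / (2 * T * real Nn)"
    have \<delta>: "0 < \<delta>" unfolding \<delta>_def using \<epsilon> T0 Nn by simp
    have jK: "Suc (i + l) \<le> n" if "l < Nn" for l using that Nn Kn by linarith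

    have exX: "\<exists>p. fst p < 1 \<and> (l < Nn \<longrightarrow>
        (\<forall>r. Rminus rateRX (Ij n (i + l)) \<Gamma> T \<le> r \<and> r \<le> Rplus rateRX (Ij n (i + l)) \<Gamma> T \<longrightarrow> 2 * r * (fst p / (1 - fst p)) \<le> snd p)
      \<and> (\<forall>\<Delta>. cminus fst (Sup (Ij n (i + l))) \<Gamma> - cplus fst (Inf (Ij n (i + l))) \<Gamma> \<le> \<Delta>
             \<and> \<Delta> \<le> cplus fst (Sup (Ij n (i + l))) \<Gamma> - cminus fst (Inf (Ij n (i + l))) \<Gamma>
          \<longrightarrow> calE_X (Ij n (i + l)) \<Gamma> T - \<delta> \<le> fst p * \<Delta> - snd p * (1 / real n)))" for l
    proof (cases "l < Nn")
      case True
      note IP = Ij_props[OF n jK[OF True]]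
      have a1: "0 \<le> Rminus rateRX (Ij n (i + l)) \<Gamma> T" "Rminus rateRX (Ij n (i + l)) \<Gamma> T \<le> Rplus rateRX (Ij n (i + l)) \<Gamma> T"
        using G.R_facts[OF IP(1) IP(2) _ ne[unfolded \<Gamma>_def]] unfolding \<Gamma>_def by auto
      have a3: "0 \<le> cplus fst (Sup (Ij n (i + l))) \<Gamma> - cminus fst (Inf (Ij n (i + l))) \<Gamma>"
        unfolding \<Gamma>_def IP(3) IP(4) using n jK[OF True] ne unfolding \<Gamma>_def
        by (intro G.xp_nonneg) (auto simp: divide_right_mono)
      obtain th ka where "th < 1" "\<forall>r. Rminus rateRX (Ij n (i + l)) \<Gamma> T \<le> r \<and> r \<le> Rplus rateRX (Ij n (i + l)) \<Gamma> T \<longrightarrow> 2 * r * (th / (1 - th)) \<le> ka"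
        "\<forall>\<Delta>. cminus fst (Sup (Ij n (i + l))) \<Gamma> - cplus fst (Inf (Ij n (i + l))) \<Gamma> \<le> \<Delta>
             \<and> \<Delta> \<le> cplus fst (Sup (Ij n (i + l))) \<Gamma> - cminus fst (Inf (Ij n (i + l))) \<Gamma>
          \<longrightarrow> calE rateRX fst (Ij n (i + l)) \<Gamma> T - \<delta> \<le> th * \<Delta> - ka * (Sup (Ij n (i + l)) - Inf (Ij n (i + l)))"
        using choose_comp[OF a1 a3 _ \<delta>] IP(5) n by auto
      then show ?thesis unfolding calE_X_def IP(5) by (intro exI[of _ "(th, ka)"]) auto
    next
      case False then show ?thesis by (intro exI[of _ "(0, 0)"]) auto
    qed
    have exY: "\<exists>p. fst p < 1 \<and> (l < Nn \<longrightarrow>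
        (\<forall>r. Rminus rateRY (Ij n (i + l)) \<Gamma> T \<le> r \<and> r \<le> Rplus rateRY (Ij n (i + l)) \<Gamma> T \<longrightarrow> 2 * r * (fst p / (1 - fst p)) \<le> snd p)
      \<and> (\<forall>\<Delta>. cminus snd (Sup (Ij n (i + l))) \<Gamma> - cplus snd (Inf (Ij n (i + l))) \<Gamma> \<le> \<Delta>
             \<and> \<Delta> \<le> cplus snd (Sup (Ij n (i + l))) \<Gamma> - cminus snd (Inf (Ij n (i + l))) \<Gamma>
          \<longrightarrow> calE_Y (Ij n (i + l)) \<Gamma> T - \<delta> \<le> fst p * \<Delta> - snd p * (1 / real n)))" for l
    proof (cases "l < Nn")
      case True
      note IP = Ij_props[OF n jK[OF True]]
      have a1: "0 \<le> Rminus rateRY (Ij n (i + l)) \<Gamma> T" "Rminus rateRY (Ij n (i + l)) \<Gamma> T \<le> Rplus rateRY (Ij n (i + l)) \<Gamma> T"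
        using G.R_facts[OF IP(1) IP(2) _ ne[unfolded \<Gamma>_def]] unfolding \<Gamma>_def by auto
      have a3: "0 \<le> cplus snd (Sup (Ij n (i + l))) \<Gamma> - cminus snd (Inf (Ij n (i + l))) \<Gamma>"
        unfolding \<Gamma>_def IP(3) IP(4) using n jK[OF True] ne unfolding \<Gamma>_def
        by (intro G.xp_nonneg) (auto simp: divide_right_mono)
      obtain th ka where "th < 1" "\<forall>r. Rminus rateRY (Ij n (i + l)) \<Gamma> T \<le> r \<and> r \<le> Rplus rateRY (Ij n (i + l)) \<Gamma> T \<longrightarrow> 2 * r * (th / (1 - th)) \<le> ka"
        "\<forall>\<Delta>. cminus snd (Sup (Ij n (i + l))) \<Gamma> - cplus snd (Inf (Ij n (i + l))) \<Gamma> \<le> \<Delta>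
             \<and> \<Delta> \<le> cplus snd (Sup (Ij n (i + l))) \<Gamma> - cminus snd (Inf (Ij n (i + l))) \<Gamma>
          \<longrightarrow> calE rateRY snd (Ij n (i + l)) \<Gamma> T - \<delta> \<le> th * \<Delta> - ka * (Sup (Ij n (i + l)) - Inf (Ij n (i + l)))"
        using choose_comp[OF a1 a3 _ \<delta>] IP(5) n by auto
      then show ?thesis unfolding calE_Y_def IP(5) by (intro exI[of _ "(th, ka)"]) auto
    next
      case False then show ?thesis by (intro exI[of _ "(0, 0)"]) auto
    qed
    obtain pX where pX: "\<And>l. fst (pX l) < 1 \<and> (l < Nn \<longrightarrow>
        (\<forall>r. Rminus rateRX (Ij n (i + l)) \<Gamma> T \<le> r \<and> r \<le> Rplus rateRX (Ij n (i + l)) \<Gamma> T \<longrightarrow> 2 * r * (fst (pX l) / (1 - fst (pX l))) \<le> snd (pX l))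
      \<and> (\<forall>\<Delta>. cminus fst (Sup (Ij n (i + l))) \<Gamma> - cplus fst (Inf (Ij n (i + l))) \<Gamma> \<le> \<Delta>
             \<and> \<Delta> \<le> cplus fst (Sup (Ij n (i + l))) \<Gamma> - cminus fst (Inf (Ij n (i + l))) \<Gamma>
          \<longrightarrow> calE_X (Ij n (i + l)) \<Gamma> T - \<delta> \<le> fst (pX l) * \<Delta> - snd (pX l) * (1 / real n)))"
    proof -
      have "\<forall>l. \<exists>p. fst p < 1 \<and> (l < Nn \<longrightarrow>
        (\<forall>r. Rminus rateRX (Ij n (i + l)) \<Gamma> T \<le> r \<and> r \<le> Rplus rateRX (Ij n (i + l)) \<Gamma> T \<longrightarrow> 2 * r * (fst p / (1 - fst p)) \<le> snd p)
      \<and> (\<forall>\<Delta>. cminus fst (Sup (Ij n (i + l))) \<Gamma> - cplus fst (Inf (Ij n (i + l))) \<Gamma> \<le> \<Delta>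
             \<and> \<Delta> \<le> cplus fst (Sup (Ij n (i + l))) \<Gamma> - cminus fst (Inf (Ij n (i + l))) \<Gamma>
          \<longrightarrow> calE_X (Ij n (i + l)) \<Gamma> T - \<delta> \<le> fst p * \<Delta> - snd p * (1 / real n)))"
        using exX by blast
      from choice[OF this] show ?thesis using that by blast
    qed
    obtain pY where pY: "\<And>l. fst (pY l) < 1 \<and> (l < Nn \<longrightarrow>
        (\<forall>r. Rminus rateRY (Ij n (i + l)) \<Gamma> T \<le> r \<and> r \<le> Rplus rateRY (Ij n (i + l)) \<Gamma> T \<longrightarrow> 2 * r * (fst (pY l) / (1 - fst (pY l))) \<le> snd (pY l))
      \<and> (\<forall>\<Delta>. cminus snd (Sup (Ij n (i + l))) \<Gamma> - cplus snd (Inf (Ij n (i + l))) \<Gamma> \<le> \<Delta>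
             \<and> \<Delta> \<le> cplus snd (Sup (Ij n (i + l))) \<Gamma> - cminus snd (Inf (Ij n (i + l))) \<Gamma>
          \<longrightarrow> calE_Y (Ij n (i + l)) \<Gamma> T - \<delta> \<le> fst (pY l) * \<Delta> - snd (pY l) * (1 / real n)))"
    proof -
      have "\<forall>l. \<exists>p. fst p < 1 \<and> (l < Nn \<longrightarrow>
        (\<forall>r. Rminus rateRY (Ij n (i + l)) \<Gamma> T \<le> r \<and> r \<le> Rplus rateRY (Ij n (i + l)) \<Gamma> T \<longrightarrow> 2 * r * (fst p / (1 - fst p)) \<le> snd p)
      \<and> (\<forall>\<Delta>. cminus snd (Sup (Ij n (i + l))) \<Gamma> - cplus snd (Inf (Ij n (i + l))) \<Gamma> \<le> \<Delta>
             \<and> \<Delta> \<le> cplus snd (Sup (Ij n (i + l))) \<Gamma> - cminus snd (Inf (Ij n (i + l))) \<Gamma>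
          \<longrightarrow> calE_Y (Ij n (i + l)) \<Gamma> T - \<delta> \<le> fst p * \<Delta> - snd p * (1 / real n)))"
        using exY by blast
      from choice[OF this] show ?thesis using that by blast
    qed
    define thX where "thX l = fst (pX l)" for l
    define thY where "thY l = fst (pY l)" for l
    define kX where "kX l = snd (pX l)" for l
    define kY where "kY l = snd (pY l)" for l
    interpret TP: tiltp d Nn thX thY
      using d pX pY unfolding thX_def thY_def by unfold_locales auto

    have hX: "thX l < 1" "l < Nn \<Longrightarrow> Rminus rateRX (Ij n (i + l)) \<Gamma> T \<le> r \<Longrightarrow> r \<le> Rplus rateRX (Ij n (i + l)) \<Gamma> T \<Longrightarrow> 2 * r * (thX l / (1 - thX l)) \<le> kX l"
      "l < Nn \<Longrightarrow> cminus fst (Sup (Ij n (i + l))) \<Gamma> - cplus fst (Inf (Ij n (i + l))) \<Gamma> \<le> \<Delta> \<Longrightarrow>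
             \<Delta> \<le> cplus fst (Sup (Ij n (i + l))) \<Gamma> - cminus fst (Inf (Ij n (i + l))) \<Gamma>
          \<Longrightarrow> calE_X (Ij n (i + l)) \<Gamma> T - \<delta> \<le> thX l * \<Delta> - kX l * (1 / real n)" for l r \<Delta>
      using pX[of l] unfolding thX_def kX_def by auto
    have hY: "thY l < 1" "l < Nn \<Longrightarrow> Rminus rateRY (Ij n (i + l)) \<Gamma> T \<le> r \<Longrightarrow> r \<le> Rplus rateRY (Ij n (i + l)) \<Gamma> T \<Longrightarrow> 2 * r * (thY l / (1 - thY l)) \<le> kY l"
      "l < Nn \<Longrightarrow> cminus snd (Sup (Ij n (i + l))) \<Gamma> - cplus snd (Inf (Ij n (i + l))) \<Gamma> \<le> \<Delta> \<Longrightarrow>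
             \<Delta> \<le> cplus snd (Sup (Ij n (i + l))) \<Gamma> - cminus snd (Inf (Ij n (i + l))) \<Gamma>
          \<Longrightarrow> calE_Y (Ij n (i + l)) \<Gamma> T - \<delta> \<le> thY l * \<Delta> - kY l * (1 / real n)" for l r \<Delta>
      using pY[of l] unfolding thY_def kY_def by auto
    define D where "D = 2 * T * Bd M T"
    define Gd where "Gd = {\<omega> \<in> space Q_meas. \<forall>k. 0 < fst (fst (\<omega> k)) \<and> 0 \<le> snd (fst (\<omega> k))}"
    define Z where "Z = {\<omega> \<in> space Q_meas. \<forall>k. (\<Sum>m<k. max 0 (snd (fst (\<omega> m)))) \<le> D}"
    define c where "c = exp (T * Es - 2 * T * real Nn * \<delta>)"
    have c: "0 < c" unfolding c_def by simp
    define zn where "zn \<longleftrightarrow> 0 \<le> fst z0 \<and> 0 \<le> snd z0"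
    define B where "B k0 = {\<omega> \<in> space Q_meas. zn \<and> (\<forall>k\<ge>k0. c \<le> TP.W k z0 0 \<omega>)}" for k0
    have Gd_sets: "Gd \<in> sets Q_meas" unfolding Gd_def by measurable
    have Z_sets: "Z \<in> sets Q_meas" unfolding Z_def by measurable
    have B_sets: "B k0 \<in> sets Q_meas" for k0 unfolding B_def by measurable
    have cover: "A \<subseteq> (space Q_meas - Gd) \<union> Z \<union> (\<Union>k0. B k0)"
    proof
      fix \<omega> assume \<omega>A: "\<omega> \<in> A"
      have \<omega>s: "\<omega> \<in> space Q_meas" using \<omega>A unfolding A_def by auto
      show "\<omega> \<in> (space Q_meas - Gd) \<union> Z \<union> (\<Union>k0. B k0)"
      proof (cases "\<omega> \<in> Gd")
        case False then show ?thesis using \<omega>s by auto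
      next
        case True
        have hpos: "\<And>k. 0 < fst (fst (\<omega> k))" and enn: "\<And>k. 0 \<le> snd (fst (\<omega> k))"
          using True unfolding Gd_def by auto
        obtain g where g: "g \<in> \<Gamma>" and gp: "\<And>s. s \<in> {real i / real n..\<theta>} \<Longrightarrow> evalp g s = path \<omega> s"
          using \<omega>A unfolding A_def restr_in_def by auto
        have in_n: "real i / real n \<le> real K / real n" using iK n by (simp add: divide_right_mono)
        have i1: "real i / real n \<le> 1" using in_n Kn n by (simp add: divide_le_eq)
        have i0: "0 \<le> real i / real n" by simp
        have in0: "real i / real n \<in> {real i / real n..\<theta>}" using in_n Kth by auto
        have zg: "z = evalp g (real i / real n)"
        proof -
          have "path \<omega> (real i / real n) = (1 / T) *\<^sub>R proc z0 \<omega> 0" unfolding path_def by simp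
          also have "\<dots> = z" unfolding proc_0[OF hpos] z0_def using T0 by simp
          finally show ?thesis using gp[OF in0] by simp
        qed
        have gb0: "0 \<le> fst g (real i / real n) \<and> 0 \<le> snd g (real i / real n)"
          using Gamma_bounds[OF g[unfolded \<Gamma>_def] _ i0 i1] assms(3) by auto
        have z_nn: "0 \<le> fst z0" "0 \<le> snd z0"
          unfolding z0_def zg using gb0 T0 by (auto simp: evalp_def)
        have zn: zn using z_nn unfolding zn_def by auto
        define S where "S = Sf z0 0 \<omega>"
        have Sm: "strict_mono S" unfolding S_def by (rule Sf_strict[OF z_nn hpos])
        have S0: "S 0 = 0" unfolding S_def Sf_def by simp
        have pe: "proc z0 \<omega> t = ch z0 \<omega> (Nt S t)" for t unfolding S_def by (rule proc_eq[OF z_nn enn])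
        have pathfact: "ch z0 \<omega> (Nt S t) = T *\<^sub>R evalp g (real i / real n + t / T)"
          if t: "0 \<le> t" "t \<le> real Nn * d" for t
        proof -
          define s where "s = real i / real n + t / T"
          have "t / T \<le> real Nn / real n" using t T0 unfolding d_def by (simp add: divide_simps)
          then have "s \<le> real K / real n" unfolding s_def Nn(2) using n by (simp add: add_divide_distrib)
          then have sI: "s \<in> {real i / real n..\<theta>}" unfolding s_def using t T0 Kth by auto
          have st: "s * T - real i / real n * T = t" unfolding s_def using T0 by (simp add: field_simps)
          have "evalp g s = (1 / T) *\<^sub>R ch z0 \<omega> (Nt S t)" using gp[OF sI] unfolding path_def st pe .
          then have "T *\<^sub>R evalp g s = ch z0 \<omega> (Nt S t)" using T0 by simp
          then show ?thesis unfolding s_def by simp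
        qed
        show ?thesis
        proof (cases "\<exists>k. real Nn * d < S k")
          case False
          have "(\<Sum>m<k. max 0 (snd (fst (\<omega> m)))) \<le> D" for k
          proof -
            have Sk1: "S k \<le> real Nn * d" using False not_less by blast
            have Sk0: "0 \<le> S k" using S0 strict_mono_less_eq[OF Sm, of 0 k] by auto
            note Sk = Sk0 Sk1
            have "Nt S (S k) = k" using Sm by (intro Nt_eq) (auto simp: strict_mono_Suc_iff)
            then have chk: "ch z0 \<omega> k = T *\<^sub>R evalp g (real i / real n + S k / T)"
              using pathfact[OF Sk] by simp
            define s where "s = real i / real n + S k / T"
            have "S k / T \<le> real Nn / real n" using Sk T0 unfolding d_def by (simp add: divide_simps)
            then have "s \<le> real K / real n" unfolding s_def Nn(2) using n by (simp add: add_divide_distrib)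
            moreover have "real K / real n \<le> 1" using Kn n by (simp add: divide_le_eq)
            moreover have "0 \<le> s" unfolding s_def using Sk T0 by simp
            ultimately have s01: "0 \<le> s" "s \<le> 1" by linarith+
            have gb: "fst g s \<le> Bd M T" "snd g s \<le> Bd M T"
              using Gamma_bounds[OF g[unfolded \<Gamma>_def] _ s01] assms(3) by auto
            have "fst (ch z0 \<omega> k) + snd (ch z0 \<omega> k) = T * fst g s + T * snd g s"
              unfolding chk s_def[symmetric] by (simp add: evalp_def)
            also have "\<dots> \<le> T * Bd M T + T * Bd M T" using gb T0 by (intro add_mono mult_left_mono) auto
            also have "\<dots> = D" unfolding D_def by simp
            finally show ?thesis unfolding ch_sum using z_nn by linarith
          qed
          then show ?thesis using \<omega>s unfolding Z_def by auto
        next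
          case True
          then obtain k where k: "real Nn * d < S k" by auto
          have nd: "0 \<le> real Nn * d" using d by simp
          have k0: "k \<noteq> 0"
          proof
            assume "k = 0"
            then have "real Nn * d < 0" using k S0 by simp
            then show False using nd by linarith
          qed
          then obtain k0 where kk: "k = Suc k0" using not0_implies_Suc by blast
          have stab: "TP.W k' z0 0 \<omega> = TP.W k z0 0 \<omega>" if "k \<le> k'" for k'
          proof (rule TP.W_stable[OF _ that])
            fix m assume "k \<le> m"
            then have "S k \<le> S m" using strict_mono_less_eq[OF Sm] by auto
            then show "TP.Wterm z0 0 \<omega> m = 0"
              using k Sm unfolding S_def by (intro TP.Wterm_zero) auto
          qed
          have core: "c \<le> TP.W k z0 0 \<omega>"
          proof -
            define cc where "cc m = ch z0 \<omega> m" for m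
            define xj where "xj m \<longleftrightarrow> snd (\<omega> m) < dirP (cc m)" for m
            define ee where "ee m = max 0 (snd (fst (\<omega> m)))" for m
            have kNd: "real Nn * d < S (Suc k0)" using k kk by simp
            have cdef: "cc (Suc m) = (if xj m then cc m + (ee m, 0) else cc m + (0, ee m))" for m
              unfolding cc_def xj_def ee_def by simp
            have gG: "g \<in> Gamma M T f n" using g unfolding \<Gamma>_def .
            have lt_eq: "real i / real n + t / T \<in> Ij n (i + l)"
              if "real l * d \<le> t" "t \<le> real (Suc l) * d" for l t
            proof -
              have e1: "real (i + l) / real n = real i / real n + real l * d / T"
                unfolding d_def using T0 n by (simp add: field_simps)
              have e2: "real (i + l + 1) / real n = real i / real n + real (Suc l) * d / T"
                unfolding d_def using T0 n by (simp add: field_simps)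
              have "real l * d / T \<le> t / T" "t / T \<le> real (Suc l) * d / T"
                using that T0 by (auto simp: divide_right_mono)
              then show ?thesis unfolding Ij_def atLeastAtMost_iff e1 e2 by (intro conjI) linarith+
            qed
            have kap: "TP.coefL (cc m) l \<le> kX l + kY l"
              if l: "l < Nn" and m: "m < Suc k0" and ovp: "0 < ov (S m) (S (Suc m)) (real l * d) (real (Suc l) * d)" for l m
            proof -
              define a where "a = max (S m) (real l * d)"
              define b where "b = min (S (Suc m)) (real (Suc l) * d)"
              have oe: "ov (S m) (S (Suc m)) (real l * d) (real (Suc l) * d) = max 0 (b - a)"
                unfolding ov_def a_def b_def ..
              have "0 < max 0 (b - a)" using ovp unfolding oe .
              then have ab: "a < b" by (simp add: less_max_iff_disj)
              define t where "t = (a + b) / 2"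
              have t1: "a < t" "t < b" using ab unfolding t_def by auto
              have t2: "S m \<le> t" "t < S (Suc m)" "real l * d \<le> t" "t \<le> real (Suc l) * d"
                using t1 unfolding a_def b_def by auto
              have lN: "real (Suc l) * d \<le> real Nn * d" using l d by (intro mult_right_mono) auto
              have t0: "0 \<le> t" using t2(3) d by (meson mult_nonneg_nonneg of_nat_0_le_iff order.trans less_imp_le)
              have tN: "t \<le> real Nn * d" using t2(4) lN by linarith
              have Ntm: "Nt S t = m" by (rule Nt_eq[OF Sm t2(1) t2(2)])
              have ccm: "cc m = T *\<^sub>R evalp g (real i / real n + t / T)"
                using pathfact[OF t0 tN] unfolding Ntm cc_def .
              note IP = Ij_props[OF n jK[OF l]]
              have sI: "real i / real n + t / T \<in> Ij n (i + l)" by (rule lt_eq[OF t2(3) t2(4)])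
              have rx: "Rminus rateRX (Ij n (i + l)) \<Gamma> T \<le> rateRX (cc m) \<and> rateRX (cc m) \<le> Rplus rateRX (Ij n (i + l)) \<Gamma> T"
                unfolding ccm \<Gamma>_def by (rule G.R_between[OF IP(1) _ sI gG]) simp
              have ry: "Rminus rateRY (Ij n (i + l)) \<Gamma> T \<le> rateRY (cc m) \<and> rateRY (cc m) \<le> Rplus rateRY (Ij n (i + l)) \<Gamma> T"
                unfolding ccm \<Gamma>_def by (rule G.R_between[OF IP(1) _ sI gG]) simp
              have "2 * rateRX (cc m) * (thX l / (1 - thX l)) \<le> kX l" using hX(2)[OF l] rx by blast
              moreover have "2 * rateRY (cc m) * (thY l / (1 - thY l)) \<le> kY l" using hY(2)[OF l] ry by blast
              ultimately show ?thesis unfolding TP.coefL_def by linarith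
            qed
            have PB: "(\<Sum>l<Nn. thX l * (fst (cc (Nt S (real (Suc l) * d))) - fst (cc (Nt S (real l * d))))
                   + thY l * (snd (cc (Nt S (real (Suc l) * d))) - snd (cc (Nt S (real l * d)))) - (kX l + kY l) * d)
                \<le> (\<Sum>m<Suc k0. TP.tilt (S (Suc m)) (xj m) (ee m) - TP.Cz (cc m) (S m) (S (Suc m)))"
              by (rule TP.path_bound[where S=S and c=cc and xj=xj and e=ee and \<kappa>="\<lambda>l. kX l + kY l", OF Sm S0 kNd cdef kap])
            have RHS: "(\<Sum>m<Suc k0. TP.tilt (S (Suc m)) (xj m) (ee m) - TP.Cz (cc m) (S m) (S (Suc m)))
                 = (\<Sum>m<k. TP.Wterm z0 0 \<omega> m)"
              unfolding kk TP.Wterm_def S_def cc_def xj_def ee_def ..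
            have termb: "T * (calE_X (Ij n (i + l)) \<Gamma> T + calE_Y (Ij n (i + l)) \<Gamma> T) - 2 * T * \<delta>
                \<le> thX l * (fst (cc (Nt S (real (Suc l) * d))) - fst (cc (Nt S (real l * d))))
                   + thY l * (snd (cc (Nt S (real (Suc l) * d))) - snd (cc (Nt S (real l * d)))) - (kX l + kY l) * d"
              if l: "l < Nn" for l
            proof -
              note IP = Ij_props[OF n jK[OF l]]
              define a where "a = Inf (Ij n (i + l))"
              define b where "b = Sup (Ij n (i + l))"
              have lN: "real (Suc l) * d \<le> real Nn * d" using l d by (intro mult_right_mono) auto
              have l0: "0 \<le> real l * d" using d by simp
              have l1: "real l * d \<le> real Nn * d" using lN d by (simp add: mult_right_mono)
              have ea: "real i / real n + real l * d / T = a"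
                unfolding a_def IP(3) d_def using T0 n by (simp add: field_simps)
              have eb: "real i / real n + real (Suc l) * d / T = b"
                unfolding b_def IP(4) d_def using T0 n by (simp add: field_simps)
              have cA: "cc (Nt S (real l * d)) = T *\<^sub>R evalp g a"
                using pathfact[OF l0 l1] unfolding ea cc_def .
              have cB: "cc (Nt S (real (Suc l) * d)) = T *\<^sub>R evalp g b"
                using pathfact[OF _ lN] d unfolding eb cc_def by simp
              have ab01: "0 \<le> a" "a \<le> 1" "0 \<le> b" "b \<le> 1"
                using IP(1) IP(2) unfolding a_def b_def
                by (auto intro!: cInf_greatest cSup_least cInf_lower2 cSup_upper2 simp: Ij_def)
              have bx: "cminus fst b \<Gamma> - cplus fst a \<Gamma> \<le> fst g b - fst g a \<and> fst g b - fst g a \<le> cplus fst b \<Gamma> - cminus fst a \<Gamma>"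
                using G.c_between[OF ab01(3) ab01(4) _ gG, of fst] G.c_between[OF ab01(1) ab01(2) _ gG, of fst]
                unfolding \<Gamma>_def by auto
              have by': "cminus snd b \<Gamma> - cplus snd a \<Gamma> \<le> snd g b - snd g a \<and> snd g b - snd g a \<le> cplus snd b \<Gamma> - cminus snd a \<Gamma>"
                using G.c_between[OF ab01(3) ab01(4) _ gG, of snd] G.c_between[OF ab01(1) ab01(2) _ gG, of snd]
                unfolding \<Gamma>_def by auto
              have X: "calE_X (Ij n (i + l)) \<Gamma> T - \<delta> \<le> thX l * (fst g b - fst g a) - kX l * (1 / real n)"
                using hX(3)[OF l] bx unfolding a_def b_def by blast
              have Y: "calE_Y (Ij n (i + l)) \<Gamma> T - \<delta> \<le> thY l * (snd g b - snd g a) - kY l * (1 / real n)"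
                using hY(3)[OF l] by' unfolding a_def b_def by blast
              have dT: "d = T * (1 / real n)" unfolding d_def by simp
              have kd: "(kX l + kY l) * d = T * (kX l * (1 / real n) + kY l * (1 / real n))"
                unfolding dT by (simp add: algebra_simps)
              have "thX l * (fst (cc (Nt S (real (Suc l) * d))) - fst (cc (Nt S (real l * d))))
                   + thY l * (snd (cc (Nt S (real (Suc l) * d))) - snd (cc (Nt S (real l * d)))) - (kX l + kY l) * d
                 = T * ((thX l * (fst g b - fst g a) - kX l * (1 / real n)) + (thY l * (snd g b - snd g a) - kY l * (1 / real n)))"
                unfolding cA cB kd by (simp add: evalp_def algebra_simps)
              moreover have "T * (calE_X (Ij n (i + l)) \<Gamma> T + calE_Y (Ij n (i + l)) \<Gamma> T) - 2 * T * \<delta>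
                  = T * ((calE_X (Ij n (i + l)) \<Gamma> T - \<delta>) + (calE_Y (Ij n (i + l)) \<Gamma> T - \<delta>))"
                by (simp add: algebra_simps)
              moreover have "T * ((calE_X (Ij n (i + l)) \<Gamma> T - \<delta>) + (calE_Y (Ij n (i + l)) \<Gamma> T - \<delta>))
                  \<le> T * ((thX l * (fst g b - fst g a) - kX l * (1 / real n)) + (thY l * (snd g b - snd g a) - kY l * (1 / real n)))"
                using X Y T0 by (intro mult_left_mono) auto
              ultimately show ?thesis by linarith
            qed
            have sumE: "Es = (\<Sum>l<Nn. calE_X (Ij n (i + l)) \<Gamma> T + calE_Y (Ij n (i + l)) \<Gamma> T)"
            proof -
              have "Es = (\<Sum>j = 0 + i..<Nn + i. calE_X (Ij n j) \<Gamma> T + calE_Y (Ij n j) \<Gamma> T)"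
                unfolding Es_def Nn(2) by (simp add: add.commute)
              also have "\<dots> = (\<Sum>l = 0..<Nn. calE_X (Ij n (l + i)) \<Gamma> T + calE_Y (Ij n (l + i)) \<Gamma> T)"
                by (rule sum.shift_bounds_nat_ivl)
              finally show ?thesis by (simp add: atLeast0LessThan add.commute)
            qed
            have "T * Es - 2 * T * real Nn * \<delta>
                = (\<Sum>l<Nn. T * (calE_X (Ij n (i + l)) \<Gamma> T + calE_Y (Ij n (i + l)) \<Gamma> T) - 2 * T * \<delta>)"
              unfolding sumE by (simp add: sum_subtractf sum_distrib_left)
            also have "\<dots> \<le> (\<Sum>l<Nn. thX l * (fst (cc (Nt S (real (Suc l) * d))) - fst (cc (Nt S (real l * d))))
                   + thY l * (snd (cc (Nt S (real (Suc l) * d))) - snd (cc (Nt S (real l * d)))) - (kX l + kY l) * d)"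
              by (intro sum_mono termb) auto
            also have "\<dots> \<le> (\<Sum>m<k. TP.Wterm z0 0 \<omega> m)" using PB unfolding RHS .
            finally have "T * Es - 2 * T * real Nn * \<delta> \<le> (\<Sum>m<k. TP.Wterm z0 0 \<omega> m)" .
            then show ?thesis unfolding c_def TP.W_def by simp
          qed
          have "\<forall>k'\<ge>k. c \<le> TP.W k' z0 0 \<omega>"
          proof (intro allI impI)
            fix k' assume "k \<le> k'"
            then show "c \<le> TP.W k' z0 0 \<omega>" using core stab[of k'] by linarith
          qed
          then have "\<omega> \<in> B k" unfolding B_def using \<omega>s zn by blast
          then show ?thesis by auto
        qed
      qed
    qed
    have m1: "emeasure Q_meas (space Q_meas - Gd) = 0"
    proof -
      have ae: "AE \<omega> in Q_meas. \<forall>k. 0 < fst (fst (\<omega> k)) \<and> 0 \<le> snd (fst (\<omega> k))" by (rule AE_good)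
      have eq: "{\<omega> \<in> space Q_meas. \<not> (\<forall>k. 0 < fst (fst (\<omega> k)) \<and> 0 \<le> snd (fst (\<omega> k)))} = space Q_meas - Gd"
        unfolding Gd_def by auto
      have ss: "space Q_meas - Gd \<in> sets Q_meas" using Gd_sets by auto
      show ?thesis using AE_iff_measurable[OF ss eq] ae by simp
    qed
    have m2: "emeasure Q_meas Z = 0" unfolding Z_def by (rule Z_null)
    have m3: "emeasure Q_meas (\<Union>k0. B k0) \<le> ennreal (1 / c)"
    proof -
      have inc: "incseq B" unfolding incseq_def B_def by auto
      have "emeasure Q_meas (\<Union>k0. B k0) = (SUP k0. emeasure Q_meas (B k0))"
      proof -
        have "range B \<subseteq> sets Q_meas" using B_sets by auto
        from SUP_emeasure_incseq[OF this inc] show ?thesis by simp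
      qed
      also have "\<dots> \<le> ennreal (1 / c)"
      proof (intro SUP_least)
        fix k0
        show "emeasure Q_meas (B k0) \<le> ennreal (1 / c)"
        proof (cases zn)
          case True
          have "emeasure Q_meas (B k0) \<le> emeasure Q_meas {\<omega> \<in> space Q_meas. c \<le> TP.W k0 z0 0 \<omega>}"
            by (intro emeasure_mono) (auto simp: B_def)
          also have "\<dots> \<le> ennreal (1 / c)"
          proof (rule markov_W[OF c])
            show "(\<integral>\<^sup>+\<omega>. ennreal (TP.W k0 z0 0 \<omega>) \<partial>Q_meas) \<le> 1"
              using True unfolding zn_def by (intro TP.W_int) auto
          qed simp
          finally show ?thesis .
        next
          case False
          then have "B k0 = {}" unfolding B_def by auto
          then show ?thesis by simp
        qed
      qed
      finally show ?thesis .
    qed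
    define Btot where "Btot = (space Q_meas - Gd) \<union> Z \<union> (\<Union>k0. B k0)"
    have Btot_sets: "Btot \<in> sets Q_meas" unfolding Btot_def using Gd_sets Z_sets B_sets by auto
    have "emeasure Q_meas Btot \<le> emeasure Q_meas (space Q_meas - Gd) + emeasure Q_meas Z + emeasure Q_meas (\<Union>k0. B k0)"
      unfolding Btot_def
      by (intro order.trans[OF emeasure_subadditive] add_mono) (use Gd_sets Z_sets B_sets in auto)
    also have "\<dots> \<le> ennreal (1 / c)" using m1 m2 m3 by simp
    finally have eB: "emeasure Q_meas Btot \<le> ennreal (1 / c)" .
    have mB: "measure Q_meas Btot \<le> 1 / c"
      using eB c by (simp add: measure_def enn2real_leI)
    have "outer_prob Q_meas A \<le> measure Q_meas Btot"
      by (rule outer_le[OF _ Btot_sets]) (use cover in \<open>auto simp: Btot_def\<close>)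
    also have "\<dots> \<le> 1 / c" by (rule mB)
    also have "\<dots> = exp (- T * Es) * exp \<epsilon>"
    proof -
      have "2 * T * real Nn * \<delta> = \<epsilon>" unfolding \<delta>_def using T0 Nn by simp
      then show ?thesis unfolding c_def by (simp add: exp_diff exp_minus field_simps)
    qed
    finally show ?thesis .
  qed
  have "outer_prob Q_meas A \<le> exp (- T * Es)" by (rule le_by_exp_eps) (use main in auto)
  then show ?thesis unfolding A_def path_def z0_def \<Gamma>_def Es_def K_def .
qed


end
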